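(* Let $d\ge1$ and let $\alpha=(\alpha_1,\dots,\alpha_d)\in\mathbb{R}^d$ be such that $1,\alpha_1,\dots,\alpha_d$ are linearly independent over $\mathbb{Q}$ and span (as a $\mathbb{Q}$-vector space) a real algebraic number field of degree $d+1$ over $\mathbb{Q}$ (e.g. $\alpha=(p^{1/(d+1)},\dots,p^{d/(d+1)})$ for a prime $p$). Define $N_1=1$ and, for $i\ge2$, let $N_i$ be the smallest integer $N>N_{i-1}$ with $\langle N\alpha\rangle<\langle N_{i-1}\alpha\rangle$; let $z^{(i)}=(z^{(i)}_1,\dots,z^{(i)}_d)$ where $z^{(i)}_j$ is the nearest integer to $N_i\alpha_j$. Then the family of rank-1 lattice point sets $(P_{N_i,z^{(i)}})_{i\ge2}$ is a quasi-uniform family of point sets over $[0,1]^d$; in particular there is a constant $C$, independent of $i$, with $\rho(P_{N_i,z^{(i)}})\le C$ for all $i\ge 2$.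
   Context: For $x\in\mathbb{R}^d$, $\langle x\rangle=\max_{1\le j\le d}\min_{k\in\mathbb{Z}}|x_j-k|$. For $N\in\mathbb{N}$ and $z\in\mathbb{Z}^d$ with $\gcd(N,z_1,\dots,z_d)=1$, the rank-1 lattice point set is $P_{N,z}=\{(\{nz_1/N\},\dots,\{nz_d/N\}) : n=0,1,\dots,N-1\}\subset[0,1)^d$, where $\{x\}=x-\lfloor x\rfloor$; it equals $\Lambda\cap[0,1)^d$ for the lattice $\Lambda=\frac1N z\mathbb{Z}+\mathbb{Z}^d$. For a finite point set $P\subset[0,1]^d$ with at least two points: covering radius $h(P)=\sup_{x\in[0,1]^d}\min_{y\in P}\|x-y\|_2$, separation radius $q(P)=\frac12\min_{x,y\in P,\,x\ne y}\|x-y\|_2$, mesh ratio $\rho(P)=h(P)/q(P)$. A family $(P_{N_i})_{i}$ of point sets in $[0,1]^d$ with $N_i=|P_{N_i}|$ is a quasi-uniform family if there is a constant $c>1$ with $N_i<N_{i+1}\le cN_i$ for all $i$, and a constant $C_d$ independent of $i$ with $\rho(P_{N_i})\le C_d$ for all $i$. *)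

theory Defs
  imports "HOL-Analysis.Analysis"
begin

text \<open>Points of R^d are vectors of type real^'n, d = CARD('n) (so d \<ge> 1).\<close>

definition unit_cube :: "(real^'n::finite) set" where
  "unit_cube = {x. \<forall>j. 0 \<le> x$j \<and> x$j \<le> 1}"

definition int_dist :: "real \<Rightarrow> real" where
  "int_dist t = (INF k::int. \<bar>t - of_int k\<bar>)"

definition torus_norm :: "real^'n::finite \<Rightarrow> real" where
  "torus_norm x = Max (range (\<lambda>j. int_dist (x$j)))"

text \<open>The sequence N_i (indexed from 1; the value at 0 is irrelevant).\<close>
fun Nseq :: "real^'n::finite \<Rightarrow> nat \<Rightarrow> nat" where
  "Nseq \<alpha> 0 = 1"
| "Nseq \<alpha> (Suc 0) = 1"
| "Nseq \<alpha> (Suc (Suc i)) =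
     (LEAST M. M > Nseq \<alpha> (Suc i) \<and>
        torus_norm (of_nat M *\<^sub>R \<alpha>) < torus_norm (of_nat (Nseq \<alpha> (Suc i)) *\<^sub>R \<alpha>))"

definition zvec :: "real^'n::finite \<Rightarrow> nat \<Rightarrow> int^'n" where
  "zvec \<alpha> i = (\<chi> j. round (of_nat (Nseq \<alpha> i) * \<alpha>$j))"

definition rank1_lattice :: "nat \<Rightarrow> int^'n::finite \<Rightarrow> (real^'n) set" where
  "rank1_lattice N z = {(\<chi> j. frac (of_nat n * of_int (z$j) / of_nat N)) | n. n < N}"

definition rank1_admissible :: "nat \<Rightarrow> int^'n::finite \<Rightarrow> bool" where
  "rank1_admissible N z \<longleftrightarrow> Gcd (insert (int N) (range (\<lambda>j. z$j))) = 1"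

definition covering_radius :: "(real^'n::finite) set \<Rightarrow> real" where
  "covering_radius P = (SUP x\<in>unit_cube. INF y\<in>P. dist x y)"

definition separation_radius :: "(real^'n::finite) set \<Rightarrow> real" where
  "separation_radius P = Inf {dist x y | x y. x \<in> P \<and> y \<in> P \<and> x \<noteq> y} / 2"

definition mesh_ratio :: "(real^'n::finite) set \<Rightarrow> real" where
  "mesh_ratio P = covering_radius P / separation_radius P"

definition quasi_uniform_family :: "nat \<Rightarrow> (nat \<Rightarrow> (real^'n::finite) set) \<Rightarrow> bool" where
  "quasi_uniform_family i0 P \<longleftrightarrow>
     (\<forall>i\<ge>i0. finite (P i) \<and> P i \<subseteq> unit_cube \<and> card (P i) \<ge> 2) \<and>
     (\<exists>c::real. c > 1 \<and> (\<forall>i\<ge>i0. card (P i) < card (P (Suc i)) \<and>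
                                  real (card (P (Suc i))) \<le> c * real (card (P i)))) \<and>
     (\<exists>C::real. \<forall>i\<ge>i0. mesh_ratio (P i) \<le> C)"

definition rat_span :: "real^'n::finite \<Rightarrow> real set" where
  "rat_span \<alpha> = {c0 + (\<Sum>j\<in>UNIV. c$j * \<alpha>$j) | c0 c. c0 \<in> \<rat> \<and> (\<forall>j. c$j \<in> \<rat>)}"

definition rat_lin_indep_1 :: "real^'n::finite \<Rightarrow> bool" where
  "rat_lin_indep_1 \<alpha> \<longleftrightarrow>
     (\<forall>c0 c. c0 \<in> \<rat> \<and> (\<forall>j. c$j \<in> \<rat>) \<and> c0 + (\<Sum>j\<in>UNIV. c$j * \<alpha>$j) = 0
        \<longrightarrow> c0 = 0 \<and> (\<forall>j. c$j = 0))"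

text \<open>The Q-span is a subfield of R (then of degree d+1 by linear independence,
  hence an algebraic number field).\<close>
definition span_is_field :: "real^'n::finite \<Rightarrow> bool" where
  "span_is_field \<alpha> \<longleftrightarrow>
     (\<forall>x\<in>rat_span \<alpha>. \<forall>y\<in>rat_span \<alpha>. x * y \<in> rat_span \<alpha>) \<and>
     (\<forall>x\<in>rat_span \<alpha>. x \<noteq> 0 \<longrightarrow> inverse x \<in> rat_span \<alpha>)"

end

theory Submission
  imports Defs
begin


lemma int_dist_eq: "int_dist t = \<bar>t - of_int (round t)\<bar>"
  unfolding int_dist_def
  by (rule cInf_eq_minimum) (auto intro: round_diff_minimal)

lemma int_dist_le: "int_dist t \<le> \<bar>t - of_int k\<bar>"
  unfolding int_dist_eq by (rule round_diff_minimal)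

lemma int_dist_nonneg: "int_dist t \<ge> 0"
  unfolding int_dist_eq by simp

lemma int_dist_half: "int_dist t \<le> 1/2"
  unfolding int_dist_eq
  by (metis abs_minus_commute of_int_round_abs_le)

lemma int_dist_ex: "\<exists>k::int. int_dist t = \<bar>t - of_int k\<bar>"
  using int_dist_eq by blast

lemma int_dist_le_abs: "int_dist t \<le> \<bar>t\<bar>"
  using int_dist_le[of t 0] by simp

lemma int_dist_shift: "int_dist (t + of_int k) = int_dist t"
proof (rule antisym)
  obtain m where m: "int_dist t = \<bar>t - of_int m\<bar>" using int_dist_ex by blast
  show "int_dist (t + of_int k) \<le> int_dist t"
    using int_dist_le[of "t + of_int k" "m + k"] m by simp
  obtain m' where m': "int_dist (t + of_int k) = \<bar>t + of_int k - of_int m'\<bar>" using int_dist_ex by blast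
  show "int_dist t \<le> int_dist (t + of_int k)"
    using int_dist_le[of "t" "m' - k"] m' by (simp add: algebra_simps)
qed

lemma int_dist_Ints: "s \<in> \<int> \<Longrightarrow> int_dist (t + s) = int_dist t"
  by (metis Ints_cases int_dist_shift)

lemma int_dist_zero_Ints: "s \<in> \<int> \<Longrightarrow> int_dist s = 0"
  using int_dist_Ints[of s 0] int_dist_le_abs[of 0] int_dist_nonneg[of 0] by simp

lemma int_dist_minus: "int_dist (- t) = int_dist t"
proof -
  have "\<And>t. int_dist (- t) \<le> int_dist t"
  proof -
    fix t
    obtain m where m: "int_dist t = \<bar>t - of_int m\<bar>" using int_dist_ex by blast
    show "int_dist (- t) \<le> int_dist t"
      using int_dist_le[of "- t" "- m"] m by simp
  qed
  from this[of t] this[of "-t"] show ?thesis by simp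
qed

lemma int_dist_add_le: "int_dist (a + b) \<le> int_dist a + \<bar>b\<bar>"
proof -
  obtain m where m: "int_dist a = \<bar>a - of_int m\<bar>" using int_dist_ex by blast
  show ?thesis using int_dist_le[of "a+b" m] m by simp
qed

lemma int_dist_add_le2: "int_dist (a + b) \<le> int_dist a + int_dist b"
proof -
  obtain m where m: "int_dist a = \<bar>a - of_int m\<bar>" using int_dist_ex by blast
  obtain m' where m': "int_dist b = \<bar>b - of_int m'\<bar>" using int_dist_ex by blast
  show ?thesis using int_dist_le[of "a+b" "m+m'"] m m' by simp
qed

lemma int_dist_diff_ge: "int_dist (a + b) \<ge> int_dist a - \<bar>b\<bar>"
  using int_dist_add_le[of "a+b" "-b"] by simp

lemma int_dist_mult_le: "int_dist (of_int m * t) \<le> \<bar>of_int m\<bar> * int_dist t"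
proof -
  obtain k where k: "int_dist t = \<bar>t - of_int k\<bar>" using int_dist_ex by blast
  have "int_dist (of_int m * t) \<le> \<bar>of_int m * t - of_int (m*k)\<bar>" by (rule int_dist_le)
  also have "\<dots> = \<bar>of_int m\<bar> * \<bar>t - of_int k\<bar>" by (simp add: abs_mult[symmetric] algebra_simps)
  finally show ?thesis using k by simp
qed

lemma int_dist_eq_zero: "int_dist t = 0 \<Longrightarrow> t \<in> \<int>"
  unfolding int_dist_eq by (metis Ints_of_int abs_0_eq eq_iff_diff_eq_0)

lemma torus_norm_ge: "int_dist (x$j) \<le> torus_norm x"
  unfolding torus_norm_def by (rule Max_ge) auto

lemma torus_norm_ex: "\<exists>j. torus_norm x = int_dist (x$j)"
proof -
  have "Max (range (\<lambda>j. int_dist (x$j))) \<in> range (\<lambda>j. int_dist (x$j))"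
    by (rule Max_in) auto
  then show ?thesis unfolding torus_norm_def by (metis (no_types, lifting) imageE)
qed

lemma torus_norm_le_iff: "torus_norm x \<le> e \<longleftrightarrow> (\<forall>j. int_dist (x$j) \<le> e)"
  by (metis order.trans torus_norm_ex torus_norm_ge)

lemma torus_norm_less_iff: "torus_norm x < e \<longleftrightarrow> (\<forall>j. int_dist (x$j) < e)"
  by (metis order.strict_trans1 torus_norm_ex torus_norm_ge)

lemma torus_norm_nonneg: "torus_norm x \<ge> 0"
  by (meson int_dist_nonneg order.trans torus_norm_ge)

lemma torus_norm_half: "torus_norm x \<le> 1/2"
  using int_dist_half torus_norm_le_iff by blast

abbreviation tn :: "real^'n::finite \<Rightarrow> nat \<Rightarrow> real" where
  "tn \<alpha> M \<equiv> torus_norm (of_nat M *\<^sub>R \<alpha>)"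

lemma tn_comp: "int_dist (of_nat M * \<alpha>$j) \<le> tn \<alpha> M"
  using torus_norm_ge[of "of_nat M *\<^sub>R \<alpha>" j] by simp

lemma rat_lin_indep_pos:
  fixes \<alpha> :: "real^'n::finite"
  assumes "rat_lin_indep_1 \<alpha>" "M \<ge> 1"
  shows "tn \<alpha> M > 0"
proof (rule ccontr)
  assume "\<not> tn \<alpha> M > 0"
  then have z: "tn \<alpha> M = 0" using torus_norm_nonneg[of "of_nat M *\<^sub>R \<alpha>"] by linarith
  obtain j :: 'n where True by blast
  have "int_dist (of_nat M * \<alpha>$j) = 0" using tn_comp[of M \<alpha> j] z int_dist_nonneg by (simp add: antisym)
  then have "of_nat M * \<alpha>$j \<in> \<int>" by (rule int_dist_eq_zero)
  then obtain k where k: "of_nat M * \<alpha>$j = of_int k" by (metis Ints_cases)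
  define c :: "real^'n" where "c = (\<chi> i. if i = j then of_nat M else 0)"
  have "(\<Sum>i\<in>UNIV. c$i * \<alpha>$i) = of_nat M * \<alpha>$j"
    unfolding c_def by (simp add: if_distrib[where f="\<lambda>x. x * _"] sum.delta cong: if_cong)
  then have "- of_int k + (\<Sum>i\<in>UNIV. c$i * \<alpha>$i) = 0" using k by simp
  moreover have "- of_int k \<in> \<rat>" by simp
  moreover have "\<forall>i. c$i \<in> \<rat>" unfolding c_def by simp
  ultimately have "c$j = 0" using assms(1) unfolding rat_lin_indep_1_def by blast
  then show False using assms(2) unfolding c_def by simp
qed


lemma card_cube_fun: "card (PiE (UNIV::'n::finite set) (\<lambda>_. {..<L::nat})) = L ^ CARD('n)"
  by (simp add: card_PiE)

lemma dirichlet: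
  fixes \<alpha> :: "real^'n::finite"
  assumes L: "L \<ge> 1"
  shows "\<exists>n. 1 \<le> n \<and> n \<le> L ^ CARD('n) \<and> tn \<alpha> n < 1 / real L"
proof -
  define f where "f = (\<lambda>n::nat. \<lambda>j::'n. nat \<lfloor>real L * frac (real n * \<alpha>$j)\<rfloor>)"
  have fin: "f ` {0..L ^ CARD('n)} \<subseteq> PiE UNIV (\<lambda>_. {..<L})"
  proof
    fix y assume "y \<in> f ` {0..L ^ CARD('n)}"
    then obtain n where y: "y = f n" by auto
    have "\<And>j. nat \<lfloor>real L * frac (real n * \<alpha>$j)\<rfloor> < L"
    proof -
      fix j
      have "frac (real n * \<alpha>$j) < 1" by (rule frac_lt_1)
      then have "real L * frac (real n * \<alpha>$j) < real L" using L by simp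
      then have "\<lfloor>real L * frac (real n * \<alpha>$j)\<rfloor> < int L"
        by (simp add: floor_less_iff)
      then show "nat \<lfloor>real L * frac (real n * \<alpha>$j)\<rfloor> < L"
        using L by linarith
    qed
    then show "y \<in> PiE UNIV (\<lambda>_. {..<L})" unfolding y f_def by auto
  qed
  have "\<not> inj_on f {0..L ^ CARD('n)}"
  proof
    assume "inj_on f {0..L ^ CARD('n)}"
    from card_inj_on_le[OF this fin] have "card {0..L ^ CARD('n)} \<le> L ^ CARD('n)"
      by (simp add: card_cube_fun finite_PiE)
    then show False by simp
  qed
  then obtain a b where ab: "a \<in> {0..L ^ CARD('n)}" "b \<in> {0..L ^ CARD('n)}" "a \<noteq> b" "f a = f b"
    unfolding inj_on_def by blast
  obtain n n' where nn: "n < n'" "n' \<le> L ^ CARD('n)" "f n = f n'"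
  proof (cases "a < b")
    case True
    then show ?thesis using that[of a b] ab by auto
  next
    case False
    then have "b < a" using ab(3) by simp
    then show ?thesis using that[of b a] ab by auto
  qed
  define m where "m = n' - n"
  have m1: "1 \<le> m" "m \<le> L ^ CARD('n)" using nn unfolding m_def by auto
  have "\<forall>j. int_dist ((of_nat m *\<^sub>R \<alpha>)$j) < 1 / real L"
  proof
    fix j
    let ?u = "frac (real n * \<alpha>$j)" and ?u' = "frac (real n' * \<alpha>$j)"
    have fl: "\<lfloor>real L * ?u\<rfloor> = \<lfloor>real L * ?u'\<rfloor>"
    proof -
      have "nat \<lfloor>real L * ?u\<rfloor> = nat \<lfloor>real L * ?u'\<rfloor>" using nn(3) unfolding f_def by metis
      moreover have "\<lfloor>real L * ?u\<rfloor> \<ge> 0" "\<lfloor>real L * ?u'\<rfloor> \<ge> 0" by (auto simp: frac_ge_0)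
      ultimately show ?thesis by (metis eq_nat_nat_iff)
    qed
    have "\<bar>real L * ?u - real L * ?u'\<bar> < 1"
      unfolding abs_less_iff using fl of_int_floor_le[of "real L * ?u"] of_int_floor_le[of "real L * ?u'"]
        real_of_int_floor_add_one_gt[of "real L * ?u"] real_of_int_floor_add_one_gt[of "real L * ?u'"]
      by linarith
    moreover have "\<bar>real L * ?u - real L * ?u'\<bar> = real L * \<bar>?u' - ?u\<bar>"
    proof -
      have "real L * ?u - real L * ?u' = real L * (?u - ?u')" by (simp add: algebra_simps)
      then show ?thesis by (simp add: abs_mult abs_minus_commute)
    qed
    ultimately have "real L * \<bar>?u' - ?u\<bar> < 1" by simp
    then have d: "\<bar>?u' - ?u\<bar> < 1 / real L" using L
      by (simp add: pos_less_divide_eq mult.commute)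
    have "real m * \<alpha>$j = (?u' - ?u) + of_int (\<lfloor>real n' * \<alpha>$j\<rfloor> - \<lfloor>real n * \<alpha>$j\<rfloor>)"
      unfolding m_def frac_def using nn(1) by (simp add: algebra_simps of_nat_diff)
    then have "int_dist (real m * \<alpha>$j) = int_dist (?u' - ?u)"
      using int_dist_shift[of "?u' - ?u" "\<lfloor>real n' * \<alpha>$j\<rfloor> - \<lfloor>real n * \<alpha>$j\<rfloor>"] by simp
    also have "\<dots> \<le> \<bar>?u' - ?u\<bar>" by (rule int_dist_le_abs)
    finally show "int_dist ((of_nat m *\<^sub>R \<alpha>)$j) < 1 / real L" using d by simp
  qed
  then have "tn \<alpha> m < 1 / real L" using torus_norm_less_iff by blast
  then show ?thesis using m1 by blast
qed

lemma exists_better: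
  fixes \<alpha> :: "real^'n::finite"
  assumes li: "rat_lin_indep_1 \<alpha>" and N: "N \<ge> 1"
    and ba: "\<forall>M. 1 \<le> M \<and> M \<le> N \<longrightarrow> tn \<alpha> M \<ge> tn \<alpha> N"
  shows "\<exists>M. M > N \<and> tn \<alpha> M < tn \<alpha> N"
proof -
  have pos: "tn \<alpha> N > 0" by (rule rat_lin_indep_pos[OF li N])
  obtain k where k: "inverse (real (Suc k)) < tn \<alpha> N" using reals_Archimedean[OF pos] by blast
  obtain n where n: "1 \<le> n" "tn \<alpha> n < 1 / real (Suc k)" using dirichlet[of "Suc k" \<alpha>] by auto
  have "tn \<alpha> n < tn \<alpha> N" using n k by (simp add: inverse_eq_divide)
  moreover then have "n > N" using ba n(1) by (meson not_le)
  ultimately show ?thesis by blast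
qed

lemma Nseq_main:
  fixes \<alpha> :: "real^'n::finite"
  assumes li: "rat_lin_indep_1 \<alpha>"
  shows "Nseq \<alpha> (Suc k) \<ge> 1 \<and> (\<forall>M. 1 \<le> M \<and> M < Nseq \<alpha> (Suc k) \<longrightarrow> tn \<alpha> M > tn \<alpha> (Nseq \<alpha> (Suc k)))"
proof (induction k)
  case 0
  then show ?case by simp
next
  case (Suc k)
  let ?N = "Nseq \<alpha> (Suc k)"
  let ?P = "\<lambda>M. M > ?N \<and> tn \<alpha> M < tn \<alpha> ?N"
  have ba: "\<forall>M. 1 \<le> M \<and> M \<le> ?N \<longrightarrow> tn \<alpha> M \<ge> tn \<alpha> ?N"
    using Suc.IH by (auto simp: le_less)
  obtain M0 where M0: "?P M0" using exists_better[OF li _ ba] Suc.IH by blast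
  have eq: "Nseq \<alpha> (Suc (Suc k)) = (LEAST M. ?P M)" by simp
  have P: "?P (LEAST M. ?P M)" by (rule LeastI[of ?P M0, OF M0])
  have notP: "\<And>M. M < (LEAST M. ?P M) \<Longrightarrow> \<not> ?P M" by (rule not_less_Least)
  show ?case
  proof (intro conjI allI impI)
    show "1 \<le> Nseq \<alpha> (Suc (Suc k))" using eq P Suc.IH by linarith
    fix M assume M: "1 \<le> M \<and> M < Nseq \<alpha> (Suc (Suc k))"
    show "tn \<alpha> (Nseq \<alpha> (Suc (Suc k))) < tn \<alpha> M"
    proof (cases "M \<le> ?N")
      case True
      then have "tn \<alpha> M \<ge> tn \<alpha> ?N" using ba M by blast
      then show ?thesis using P unfolding eq by linarith
    next
      case False
      then have "tn \<alpha> M \<ge> tn \<alpha> ?N" using notP[of M] M eq by auto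
      then show ?thesis using P unfolding eq by linarith
    qed
  qed
qed

lemma Nseq_step:
  fixes \<alpha> :: "real^'n::finite"
  assumes li: "rat_lin_indep_1 \<alpha>"
  shows "Nseq \<alpha> (Suc (Suc k)) > Nseq \<alpha> (Suc k) \<and> tn \<alpha> (Nseq \<alpha> (Suc (Suc k))) < tn \<alpha> (Nseq \<alpha> (Suc k))
     \<and> (\<forall>M. M > Nseq \<alpha> (Suc k) \<and> tn \<alpha> M < tn \<alpha> (Nseq \<alpha> (Suc k)) \<longrightarrow> Nseq \<alpha> (Suc (Suc k)) \<le> M)"
proof -
  let ?N = "Nseq \<alpha> (Suc k)"
  let ?P = "\<lambda>M. M > ?N \<and> tn \<alpha> M < tn \<alpha> ?N"
  have IH: "?N \<ge> 1" "\<forall>M. 1 \<le> M \<and> M < ?N \<longrightarrow> tn \<alpha> M > tn \<alpha> ?N" using Nseq_main[OF li, of k] by auto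
  have ba: "\<forall>M. 1 \<le> M \<and> M \<le> ?N \<longrightarrow> tn \<alpha> M \<ge> tn \<alpha> ?N"
    using IH by (auto simp: le_less)
  obtain M0 where M0: "?P M0" using exists_better[OF li _ ba] IH by blast
  have eq: "Nseq \<alpha> (Suc (Suc k)) = (LEAST M. ?P M)" by simp
  have P: "?P (LEAST M. ?P M)" by (rule LeastI[of ?P M0, OF M0])
  show ?thesis using P eq Least_le[of ?P] by auto
qed


lemma sum_option: "(\<Sum>i\<in>(UNIV::'a::finite option set). g i) = g None + (\<Sum>j\<in>UNIV. g (Some j))"
proof -
  have "(\<Sum>i\<in>(UNIV::'a option set). g i) = (\<Sum>i\<in>insert None (range Some). g i)"
    by (simp add: UNIV_option_conv)
  also have "\<dots> = g None + (\<Sum>i\<in>range Some. g i)" by (subst sum.insert) auto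
  also have "(\<Sum>i\<in>range Some. g i) = (\<Sum>j\<in>UNIV. g (Some j))" by (subst sum.reindex) auto
  finally show ?thesis .
qed

lemma prod_option: "(\<Prod>i\<in>(UNIV::'a::finite option set). g i) = g None * (\<Prod>j\<in>UNIV. g (Some j))"
proof -
  have "(\<Prod>i\<in>(UNIV::'a option set). g i) = (\<Prod>i\<in>insert None (range Some). g i)"
    by (simp add: UNIV_option_conv)
  also have "\<dots> = g None * (\<Prod>i\<in>range Some. g i)" by (subst prod.insert) auto
  also have "(\<Prod>i\<in>range Some. g i) = (\<Prod>j\<in>UNIV. g (Some j))" by (subst prod.reindex) auto
  finally show ?thesis .
qed

definition vv :: "real^'n::finite \<Rightarrow> real^('n option)" where
  "vv \<alpha> = (\<chi> i. case i of None \<Rightarrow> 1 | Some j \<Rightarrow> \<alpha>$j)"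

lemma vv_None[simp]: "vv \<alpha> $ None = 1" and vv_Some[simp]: "vv \<alpha> $ Some j = \<alpha>$j"
  by (simp_all add: vv_def)

lemma finite_rat_denom:
  assumes "finite S" "S \<subseteq> \<rat>"
  shows "\<exists>D::int. D > 0 \<and> (\<forall>q\<in>S. of_int D * (q::real) \<in> \<int>)"
  using assms
proof (induction S rule: finite_induct)
  case empty
  then show ?case by (intro exI[of _ "1::int"]) simp
next
  case (insert q S)
  then obtain D where D: "D > 0" "\<forall>q\<in>S. of_int D * q \<in> \<int>" by auto
  from insert.prems have "q \<in> \<rat>" by auto
  then obtain a b where ab: "b > 0" "q = of_int a / of_int b" by (rule Rats_cases')
  have "of_int b * q = of_int a" using ab by simp
  then have "of_int (D * b) * q = of_int (D * a)" by (simp add: algebra_simps)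
  then have q: "of_int (D * b) * q \<in> \<int>" by (metis Ints_of_int)
  have "\<forall>q'\<in>S. of_int (D * b) * q' \<in> \<int>"
  proof
    fix q' assume "q' \<in> S"
    then have "of_int D * q' \<in> \<int>" using D by auto
    then have "of_int b * (of_int D * q') \<in> \<int>" by simp
    then show "of_int (D * b) * q' \<in> \<int>" by (simp add: algebra_simps)
  qed
  then show ?case using q D ab by (intro exI[of _ "D*b"]) auto
qed

lemma det_int_scaled:
  fixes A :: "real^'m::finite^'m"
  assumes "\<forall>i l. of_int D * A$i$l \<in> \<int>"
  shows "of_int D ^ CARD('m) * det A \<in> \<int>"
proof -
  have "of_int D ^ CARD('m) * det A =
     (\<Sum>p\<in>{p. p permutes (UNIV::'m set)}. of_int (sign p) * (\<Prod>i\<in>UNIV. of_int D * A$i$p i))"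
    unfolding det_def sum_distrib_left
    by (rule sum.cong) (simp_all add: prod.distrib prod_constant)
  also have "\<dots> \<in> \<int>"
  proof (intro Ints_sum)
    fix p
    have "(\<Prod>i\<in>UNIV. of_int D * A$i$p i) \<in> \<int>"
      by (rule Ints_prod) (use assms in blast)
    then show "of_int (sign p) * (\<Prod>i\<in>UNIV. of_int D * A$i$p i) \<in> \<int>"
      by (intro Ints_mult) auto
  qed
  finally show ?thesis .
qed

lemma det_factor:
  fixes A :: "real^('n::finite option)^('n option)"
  assumes "A *v vv \<alpha> = x *\<^sub>R vv \<alpha>"
  shows "det A = x * det (\<chi> i. if i = None then vv \<alpha> else column i A)"
proof -
  let ?A' = "(\<chi> i j. if j = None then (A *v vv \<alpha>)$i else A$i$j) :: real^('n option)^('n option)"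
  have "det ?A' = vv \<alpha> $ None * det A" by (rule cramer_lemma)
  then have "det ?A' = det A" by (simp only: vv_None mult_1_left)
  moreover have "transpose ?A' = (\<chi> i. if i = None then x *s vv \<alpha> else column i A)"
  proof -
    have "transpose ?A' $ i $ j = (\<chi> i. if i = None then x *s vv \<alpha> else column i A) $ i $ j" for i j
      by (cases i) (simp_all add: transpose_def column_def assms)
    then show ?thesis by (simp add: vec_eq_iff)
  qed
  then have "det ?A' = det (\<chi> i. if i = None then x *s vv \<alpha> else column i A)"
    by (metis (no_types) det_transpose[of ?A'])
  moreover have "\<dots> = x * det (\<chi> i. if i = None then vv \<alpha> else column i A)"
    by (rule det_row_mul)
  ultimately show ?thesis by simp
qed

lemma det_bound:
  fixes Q :: "real^('n::finite option)^('n option)"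
  assumes V: "\<forall>l. \<bar>Q$None$l\<bar> \<le> V" and W: "\<forall>i l. i \<noteq> None \<longrightarrow> \<bar>Q$i$l\<bar> \<le> W"
    and W0: "W \<ge> 0"
  shows "\<bar>det Q\<bar> \<le> real (card {p. p permutes (UNIV::'n option set)}) * (V * W ^ CARD('n))"
proof -
  let ?P = "{p. p permutes (UNIV::'n option set)}"
  define bnd where "bnd = (\<lambda>i::'n option. if i = None then V else W)"
  have pb: "\<bar>of_int (sign p) * (\<Prod>i\<in>UNIV. Q$i$p i)\<bar> \<le> V * W ^ CARD('n)" for p
  proof -
    have "\<bar>of_int (sign p) * (\<Prod>i\<in>UNIV. Q$i$p i)\<bar> = (\<Prod>i\<in>UNIV. \<bar>Q$i$p i\<bar>)"
      proof -
        have "\<bar>of_int (sign p)::real\<bar> = 1" by (simp add: sign_def)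
        then show ?thesis by (simp only: abs_mult abs_prod)
      qed
    also have "\<dots> \<le> (\<Prod>i\<in>UNIV. bnd i)"
      by (rule prod_mono) (use V W in \<open>auto simp: bnd_def\<close>)
    also have "\<dots> = V * W ^ CARD('n)" by (simp add: prod_option bnd_def)
    finally show ?thesis .
  qed
  have "\<bar>det Q\<bar> \<le> (\<Sum>p\<in>?P. \<bar>of_int (sign p) * (\<Prod>i\<in>UNIV. Q$i$p i)\<bar>)"
    unfolding det_def by (rule sum_abs)
  also have "\<dots> \<le> (\<Sum>p\<in>?P. V * W ^ CARD('n))" by (rule sum_mono) (rule pb)
  also have "\<dots> = real (card ?P) * (V * W ^ CARD('n))" by simp
  finally show ?thesis .
qed


locale alg =
  fixes \<alpha> :: "real^'n::finite"
  assumes li: "rat_lin_indep_1 \<alpha>" and fld: "span_is_field \<alpha>"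
begin

lemma alpha_in_span: "\<alpha>$j \<in> rat_span \<alpha>"
proof -
  define c :: "real^'n" where "c = (\<chi> i. if i = j then 1 else 0)"
  have "(\<Sum>i\<in>UNIV. c$i * \<alpha>$i) = \<alpha>$j"
    unfolding c_def by (simp add: if_distrib[where f="\<lambda>x. x * _"] sum.delta cong: if_cong)
  then have "\<alpha>$j = 0 + (\<Sum>i\<in>UNIV. c$i * \<alpha>$i)" by simp
  moreover have "\<forall>i. c$i \<in> \<rat>" unfolding c_def by simp
  moreover have "(0::real) \<in> \<rat>" by simp
  ultimately show ?thesis unfolding rat_span_def by blast
qed

lemma sc_ex: "\<exists>p. fst p \<in> \<rat> \<and> (\<forall>l. snd p $ l \<in> \<rat>) \<and> \<alpha>$j * \<alpha>$k = fst p + (\<Sum>l\<in>UNIV. snd p $ l * \<alpha>$l)"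
proof -
  have "\<alpha>$j * \<alpha>$k \<in> rat_span \<alpha>" using fld alpha_in_span unfolding span_is_field_def by blast
  then obtain c0 c where "c0 \<in> \<rat>" "\<forall>l. c$l \<in> \<rat>" "\<alpha>$j * \<alpha>$k = c0 + (\<Sum>l\<in>UNIV. c$l * \<alpha>$l)"
    unfolding rat_span_def by blast
  then show ?thesis by (intro exI[of _ "(c0, c)"]) simp
qed

definition sc :: "'n \<Rightarrow> 'n \<Rightarrow> real \<times> (real^'n)" where
  "sc j k = (SOME p. fst p \<in> \<rat> \<and> (\<forall>l. snd p $ l \<in> \<rat>) \<and> \<alpha>$j * \<alpha>$k = fst p + (\<Sum>l\<in>UNIV. snd p $ l * \<alpha>$l))"

lemma sc: "fst (sc j k) \<in> \<rat>" "\<forall>l. snd (sc j k) $ l \<in> \<rat>"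
   "\<alpha>$j * \<alpha>$k = fst (sc j k) + (\<Sum>l\<in>UNIV. snd (sc j k) $ l * \<alpha>$l)"
  using someI_ex[OF sc_ex[of j k]] unfolding sc_def by blast+

definition Bm :: "'n \<Rightarrow> real^('n option)^('n option)" where
  "Bm j = (\<chi> i l. case i of None \<Rightarrow> (if l = Some j then 1 else 0)
                 | Some k \<Rightarrow> (case l of None \<Rightarrow> fst (sc j k) | Some l' \<Rightarrow> snd (sc j k) $ l'))"

lemma Bm_rat: "Bm j $ i $ l \<in> \<rat>"
  unfolding Bm_def using sc by (cases i; cases l) auto

lemma Bm_v: "(\<Sum>l\<in>UNIV. Bm j $ i $ l * vv \<alpha> $ l) = \<alpha>$j * vv \<alpha> $ i"
proof (cases i)
  case None
  have "(\<Sum>l\<in>UNIV. Bm j $ i $ l * vv \<alpha> $ l) = (\<Sum>l\<in>UNIV. (if l = Some j then vv \<alpha> $ l else 0))"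
    unfolding Bm_def None by (intro sum.cong) auto
  also have "\<dots> = \<alpha>$j" by (simp add: sum.delta')
  finally show ?thesis using None by simp
next
  case (Some k)
  have "(\<Sum>l\<in>UNIV. Bm j $ i $ l * vv \<alpha> $ l) = fst (sc j k) + (\<Sum>l\<in>UNIV. snd (sc j k) $ l * \<alpha>$l)"
    unfolding sum_option by (simp add: Bm_def Some)
  also have "\<dots> = \<alpha>$j * \<alpha>$k" using sc(3) by simp
  finally show ?thesis using Some by simp
qed

definition Am :: "real \<Rightarrow> real^'n \<Rightarrow> real^('n option)^('n option)" where
  "Am c0 c = (\<chi> i l. c0 * (if i = l then 1 else 0) + (\<Sum>j\<in>UNIV. c$j * Bm j $ i $ l))"

lemma Am_v: "Am c0 c *v vv \<alpha> = (c0 + (\<Sum>j\<in>UNIV. c$j * \<alpha>$j)) *\<^sub>R vv \<alpha>"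
proof -
  have "(Am c0 c *v vv \<alpha>) $ i = ((c0 + (\<Sum>j\<in>UNIV. c$j * \<alpha>$j)) *\<^sub>R vv \<alpha>) $ i" for i
  proof -
    have "(Am c0 c *v vv \<alpha>) $ i = (\<Sum>l\<in>UNIV. (c0 * (if i = l then 1 else 0) + (\<Sum>j\<in>UNIV. c$j * Bm j $ i $ l)) * vv \<alpha> $ l)"
      by (simp add: Am_def matrix_vector_mult_def)
    also have "\<dots> = (\<Sum>l\<in>UNIV. c0 * (if i = l then 1 else 0) * vv \<alpha> $ l) + (\<Sum>l\<in>UNIV. \<Sum>j\<in>UNIV. c$j * (Bm j $ i $ l * vv \<alpha> $ l))"
      by (simp add: sum.distrib distrib_right sum_distrib_right mult.assoc)
    also have "(\<Sum>l\<in>UNIV. c0 * (if i = l then 1 else 0) * vv \<alpha> $ l) = c0 * vv \<alpha> $ i"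
      by (simp add: if_distrib[where f="\<lambda>x. c0 * x * _"] sum.delta cong: if_cong)
    also have "(\<Sum>l\<in>UNIV. \<Sum>j\<in>UNIV. c$j * (Bm j $ i $ l * vv \<alpha> $ l)) = (\<Sum>j\<in>UNIV. c$j * (\<Sum>l\<in>UNIV. Bm j $ i $ l * vv \<alpha> $ l))"
      by (subst sum.swap) (simp add: sum_distrib_left)
    also have "\<dots> = (\<Sum>j\<in>UNIV. c$j * \<alpha>$j) * vv \<alpha> $ i"
      by (simp add: Bm_v sum_distrib_right mult.assoc)
    finally show ?thesis by (simp add: algebra_simps)
  qed
  then show ?thesis by (simp add: vec_eq_iff)
qed

lemma Am_rat: assumes "c0 \<in> \<rat>" "\<forall>j. c$j \<in> \<rat>" shows "Am c0 c $ i $ l \<in> \<rat>"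
proof -
  have "(\<Sum>j\<in>UNIV. c$j * Bm j $ i $ l) \<in> \<rat>"
    by (rule Rats_sum, rule Rats_mult) (use assms Bm_rat in blast)+
  moreover have "c0 * (if i = l then 1 else 0) \<in> \<rat>" using assms by simp
  ultimately have "c0 * (if i = l then 1 else 0) + (\<Sum>j\<in>UNIV. c$j * Bm j $ i $ l) \<in> \<rat>"
    by (metis Rats_add)
  then show ?thesis unfolding Am_def by simp
qed

lemma lin_rel_zero:
  fixes w :: "real^('n option)"
  assumes "\<forall>l. w$l \<in> \<rat>" "(\<Sum>l\<in>UNIV. w$l * vv \<alpha> $ l) = 0"
  shows "w = 0"
proof -
  define c :: "real^'n" where "c = (\<chi> j. w $ Some j)"
  have "w$None + (\<Sum>j\<in>UNIV. c$j * \<alpha>$j) = 0"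
    using assms(2) unfolding sum_option c_def by simp
  moreover have "w$None \<in> \<rat>" "\<forall>j. c$j \<in> \<rat>" using assms(1) unfolding c_def by auto
  ultimately have "w$None = 0 \<and> (\<forall>j. c$j = 0)"
    using li unfolding rat_lin_indep_1_def by blast
  then have "w$l = 0" for l unfolding c_def by (cases l) auto
  then show ?thesis by (simp add: vec_eq_iff)
qed

lemma det_Am_nonzero:
  assumes "c0 \<in> \<rat>" "\<forall>j. c$j \<in> \<rat>" "c0 + (\<Sum>j\<in>UNIV. c$j * \<alpha>$j) \<noteq> 0"
  shows "det (Am c0 c) \<noteq> 0"
proof -
  let ?x = "c0 + (\<Sum>j\<in>UNIV. c$j * \<alpha>$j)"
  have "?x \<in> rat_span \<alpha>" using assms unfolding rat_span_def by blast
  then have "inverse ?x \<in> rat_span \<alpha>" using fld assms(3) unfolding span_is_field_def by blast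
  then obtain e0 e where e: "e0 \<in> \<rat>" "\<forall>j. e$j \<in> \<rat>" "inverse ?x = e0 + (\<Sum>j\<in>UNIV. e$j * \<alpha>$j)"
    unfolding rat_span_def by blast
  let ?M = "Am c0 c ** Am e0 e"
  have "?M *v vv \<alpha> = Am c0 c *v (Am e0 e *v vv \<alpha>)" by (simp add: matrix_vector_mul_assoc)
  also have "\<dots> = Am c0 c *v (inverse ?x *\<^sub>R vv \<alpha>)" using e(3) Am_v[of e0 e] by simp
  also have "\<dots> = inverse ?x *\<^sub>R (?x *\<^sub>R vv \<alpha>)" by (simp add: matrix_vector_mult_scaleR Am_v)
  also have "\<dots> = vv \<alpha>" using assms(3) by simp
  finally have Mv: "?M *v vv \<alpha> = vv \<alpha>" .
  have Mrat: "?M $ i $ l \<in> \<rat>" for i l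
    unfolding matrix_matrix_mult_def using Am_rat assms e by (auto intro!: Rats_sum Rats_mult)
  have "?M = mat 1"
  proof -
    have "?M $ i = mat 1 $ i" for i
    proof -
      define w where "w = ?M $ i - mat 1 $ i"
      have "\<forall>l. w$l \<in> \<rat>" unfolding w_def using Mrat by (auto simp: mat_def)
      moreover have "(\<Sum>l\<in>UNIV. w$l * vv \<alpha> $ l) = 0"
      proof -
        have "(\<Sum>l\<in>UNIV. ?M$i$l * vv \<alpha> $ l) = vv \<alpha> $ i"
          using Mv unfolding matrix_vector_mult_def vec_eq_iff by simp
        moreover have "(\<Sum>l\<in>UNIV. mat 1 $ i $ l * vv \<alpha> $ l) = vv \<alpha> $ i"
          by (simp add: mat_def if_distrib[where f="\<lambda>x. x * _"] sum.delta cong: if_cong)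
        ultimately show ?thesis unfolding w_def by (simp add: left_diff_distrib sum_subtractf)
      qed
      ultimately have "w = 0" by (rule lin_rel_zero)
      then show ?thesis unfolding w_def by simp
    qed
    then show ?thesis by (simp add: vec_eq_iff)
  qed
  then have "det (Am c0 c) * det (Am e0 e) = 1" by (metis det_I det_mul)
  then show ?thesis by auto
qed


lemma card_option_UNIV: "CARD('a::finite option) = Suc CARD('a)"
proof -
  have "card (insert None (range (Some::'a \<Rightarrow> 'a option))) = Suc (card (range (Some::'a \<Rightarrow> 'a option)))"
    by (subst card_insert_disjoint) auto
  also have "card (range (Some::'a \<Rightarrow> 'a option)) = CARD('a)" by (simp add: card_image)
  finally show ?thesis by (simp add: UNIV_option_conv)
qed

lemma linform:
  "\<exists>c>0. \<forall>(t::int) (h::'n \<Rightarrow> int) (H::real). H \<ge> 1 \<longrightarrow> (\<forall>j. \<bar>real_of_int (h j)\<bar> \<le> H) \<longrightarrow> (\<exists>j. h j \<noteq> 0)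
      \<longrightarrow> c / H ^ CARD('n) \<le> \<bar>of_int t + (\<Sum>j\<in>UNIV. of_int (h j) * \<alpha>$j)\<bar>"
proof -
  have "finite (range (\<lambda>(j,i,l). Bm j $ i $ l))" by simp
  moreover have "range (\<lambda>(j,i,l). Bm j $ i $ l) \<subseteq> \<rat>" using Bm_rat by auto
  ultimately obtain D0 :: int where D0: "D0 > 0" "\<forall>q\<in>range (\<lambda>(j,i,l). Bm j $ i $ l). of_int D0 * q \<in> \<int>"
    using finite_rat_denom by blast
  have D0B: "of_int D0 * Bm j $ i $ l \<in> \<int>" for j i l using D0(2) by auto
  define S\<alpha> where "S\<alpha> = (\<Sum>j\<in>UNIV. \<bar>\<alpha>$j\<bar>)"
  define BB where "BB = (\<Sum>j\<in>UNIV. \<Sum>i\<in>UNIV. \<Sum>l\<in>UNIV. \<bar>Bm j $ i $ l\<bar>)"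
  define V where "V = 1 + S\<alpha>"
  define K1 where "K1 = 1 + S\<alpha> + BB"
  define P where "P = real (card {p. p permutes (UNIV::'n option set)})"
  define d where "d = CARD('n)"
  have S\<alpha>0: "S\<alpha> \<ge> 0" unfolding S\<alpha>_def by (simp add: sum_nonneg)
  have BB0: "BB \<ge> 0" unfolding BB_def by (simp add: sum_nonneg)
  have V1: "V \<ge> 1" using S\<alpha>0 unfolding V_def by simp
  have K11: "K1 \<ge> 1" using S\<alpha>0 BB0 unfolding K1_def by simp
  have P1: "P \<ge> 1"
  proof -
    have "finite {p. p permutes (UNIV::'n option set)}" by (rule finite_permutations) simp
    moreover have "id \<in> {p. p permutes (UNIV::'n option set)}" by (simp add: permutes_id)
    ultimately show ?thesis unfolding P_def
      by (metis One_nat_def card_gt_0_iff empty_iff of_nat_1 of_nat_mono Suc_leI)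
  qed
  have D01: "real_of_int D0 \<ge> 1" using D0 by simp
  define c where "c = min 1 (1 / (of_int D0 ^ Suc d * P * V * K1 ^ d))"
  have cpos: "c > 0" unfolding c_def using D01 P1 V1 K11 by simp
  show ?thesis
  proof (intro exI[of _ c] conjI cpos allI impI)
    fix t :: int and h :: "'n \<Rightarrow> int" and H :: real
    assume H1: "H \<ge> 1" and hH: "\<forall>j. \<bar>real_of_int (h j)\<bar> \<le> H" and hnz: "\<exists>j. h j \<noteq> 0"
    let ?x = "of_int t + (\<Sum>j\<in>UNIV. of_int (h j) * \<alpha>$j)"
    have Hd: "H ^ d \<ge> 1" using H1 by simp
    show "c / H ^ CARD('n) \<le> \<bar>?x\<bar>"
    proof (cases "\<bar>?x\<bar> \<ge> 1")
      case True
      have "c / H ^ CARD('n) \<le> 1 / H ^ CARD('n)" using cpos H1 unfolding c_def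
        by (intro divide_right_mono) auto
      also have "\<dots> \<le> 1" using Hd unfolding d_def by simp
      finally show ?thesis using True by simp
    next
      case False
      then have x1: "\<bar>?x\<bar> < 1" by simp
      define hv :: "real^'n" where "hv = (\<chi> j. of_int (h j))"
      define A where "A = Am (of_int t) hv"
      have xsum: "of_int t + (\<Sum>j\<in>UNIV. hv$j * \<alpha>$j) = ?x" unfolding hv_def by simp
      have xnz: "?x \<noteq> 0"
      proof
        assume "?x = 0"
        then have "of_int t + (\<Sum>j\<in>UNIV. hv$j * \<alpha>$j) = 0" using xsum by simp
        moreover have "(of_int t::real) \<in> \<rat>" "\<forall>j. hv$j \<in> \<rat>" unfolding hv_def by auto
        ultimately have "\<forall>j. hv$j = 0" using li unfolding rat_lin_indep_1_def by blast
        then show False using hnz unfolding hv_def by auto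
      qed
      have detnz: "det A \<noteq> 0" unfolding A_def
        by (rule det_Am_nonzero) (use xsum xnz in \<open>auto simp: hv_def\<close>)
      have Aint: "\<forall>i l. of_int D0 * A$i$l \<in> \<int>"
      proof (intro allI)
        fix i l
        have "of_int D0 * A$i$l = of_int t * (of_int D0 * (if i = l then 1 else 0)) + (\<Sum>j\<in>UNIV. of_int (h j) * (of_int D0 * Bm j $ i $ l))"
          unfolding A_def Am_def hv_def by (simp add: algebra_simps sum_distrib_left)
        also have "\<dots> \<in> \<int>"
        proof (rule Ints_add)
          show "(\<Sum>j\<in>UNIV. of_int (h j) * (of_int D0 * Bm j $ i $ l)) \<in> \<int>"
            by (rule Ints_sum, rule Ints_mult) (auto simp: D0B)
          show "of_int t * (of_int D0 * (if i = l then 1 else 0)) \<in> \<int>" by simp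
        qed
        finally show "of_int D0 * A$i$l \<in> \<int>" .
      qed
      have "of_int D0 ^ CARD('n option) * det A \<in> \<int>" by (rule det_int_scaled[OF Aint])
      moreover have "of_int D0 ^ CARD('n option) * det A \<noteq> 0" using detnz D0 by simp
      ultimately have lower: "\<bar>of_int D0 ^ Suc d * det A\<bar> \<ge> 1"
        using Ints_nonzero_abs_ge1 unfolding card_option_UNIV d_def by blast
      have Av: "A *v vv \<alpha> = ?x *\<^sub>R vv \<alpha>" unfolding A_def Am_v xsum ..
      define Q where "Q = (\<chi> i. if i = None then vv \<alpha> else column i A)"
      have detA: "det A = ?x * det Q" unfolding Q_def by (rule det_factor[OF Av])
      have tb: "\<bar>real_of_int t\<bar> \<le> H * (1 + S\<alpha>)"
      proof -
        have "\<bar>\<Sum>j\<in>UNIV. of_int (h j) * \<alpha>$j\<bar> \<le> (\<Sum>j\<in>UNIV. \<bar>of_int (h j) * \<alpha>$j\<bar>)" by (rule sum_abs)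
        also have "\<dots> \<le> (\<Sum>j\<in>UNIV. H * \<bar>\<alpha>$j\<bar>)"
          by (rule sum_mono) (use hH in \<open>auto simp: abs_mult intro: mult_right_mono\<close>)
        also have "\<dots> = H * S\<alpha>" unfolding S\<alpha>_def by (simp add: sum_distrib_left)
        finally have "\<bar>\<Sum>j\<in>UNIV. of_int (h j) * \<alpha>$j\<bar> \<le> H * S\<alpha>" .
        then show ?thesis using x1 H1 by (simp add: algebra_simps)
      qed
      have Ab: "\<bar>A$i$l\<bar> \<le> H * K1" for i l
      proof -
        have "\<bar>A$i$l\<bar> \<le> \<bar>of_int t * (if i = l then 1 else 0)\<bar> + \<bar>\<Sum>j\<in>UNIV. hv$j * Bm j $ i $ l\<bar>"
          unfolding A_def Am_def by (simp add: abs_triangle_ineq)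
        also have "\<bar>of_int t * (if i = l then 1 else 0)\<bar> \<le> H * (1 + S\<alpha>)" using tb H1 S\<alpha>0 by simp
        also have "\<bar>\<Sum>j\<in>UNIV. hv$j * Bm j $ i $ l\<bar> \<le> (\<Sum>j\<in>UNIV. H * \<bar>Bm j $ i $ l\<bar>)"
        proof -
          have "\<bar>\<Sum>j\<in>UNIV. hv$j * Bm j $ i $ l\<bar> \<le> (\<Sum>j\<in>UNIV. \<bar>hv$j * Bm j $ i $ l\<bar>)" by (rule sum_abs)
          also have "\<dots> \<le> (\<Sum>j\<in>UNIV. H * \<bar>Bm j $ i $ l\<bar>)"
            by (rule sum_mono) (use hH in \<open>auto simp: abs_mult hv_def intro: mult_right_mono\<close>)
          finally show ?thesis .
        qed
        also have "(\<Sum>j\<in>UNIV. H * \<bar>Bm j $ i $ l\<bar>) \<le> H * BB"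
        proof -
          have "(\<Sum>j\<in>UNIV. \<bar>Bm j $ i $ l\<bar>) \<le> (\<Sum>j\<in>UNIV. \<Sum>i\<in>UNIV. \<Sum>l\<in>UNIV. \<bar>Bm j $ i $ l\<bar>)"
          proof (rule sum_mono)
            fix j
            have "\<bar>Bm j $ i $ l\<bar> \<le> (\<Sum>l\<in>UNIV. \<bar>Bm j $ i $ l\<bar>)"
              by (rule member_le_sum) auto
            also have "\<dots> \<le> (\<Sum>i\<in>UNIV. \<Sum>l\<in>UNIV. \<bar>Bm j $ i $ l\<bar>)"
              by (rule member_le_sum[where f="\<lambda>i. \<Sum>l\<in>UNIV. \<bar>Bm j $ i $ l\<bar>"]) (auto intro: sum_nonneg)
            finally show "\<bar>Bm j $ i $ l\<bar> \<le> (\<Sum>i\<in>UNIV. \<Sum>l\<in>UNIV. \<bar>Bm j $ i $ l\<bar>)" .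
          qed
          then show ?thesis unfolding BB_def using H1 by (simp add: sum_distrib_left[symmetric])
        qed
        finally show ?thesis unfolding K1_def by (simp add: algebra_simps)
      qed
      have Qb1: "\<forall>l. \<bar>Q$None$l\<bar> \<le> V"
      proof
        fix l :: "'n option"
        show "\<bar>Q$None$l\<bar> \<le> V"
        proof (cases l)
          case None then show ?thesis using S\<alpha>0 unfolding Q_def V_def by simp
        next
          case (Some j)
          have "\<bar>\<alpha>$j\<bar> \<le> S\<alpha>" unfolding S\<alpha>_def by (rule member_le_sum) auto
          then show ?thesis unfolding Q_def V_def Some by simp
        qed
      qed
      have Qb2: "\<forall>i l. i \<noteq> None \<longrightarrow> \<bar>Q$i$l\<bar> \<le> H * K1"
        using Ab unfolding Q_def column_def by simp
      have "\<bar>det Q\<bar> \<le> P * (V * (H * K1) ^ d)"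
        unfolding P_def d_def by (rule det_bound[OF Qb1 Qb2]) (use H1 K11 in simp)
      then have "of_int D0 ^ Suc d * (\<bar>?x\<bar> * \<bar>det Q\<bar>) \<le> of_int D0 ^ Suc d * (\<bar>?x\<bar> * (P * (V * (H * K1) ^ d)))"
        using D01 by (intro mult_left_mono) auto
      moreover have "1 \<le> of_int D0 ^ Suc d * (\<bar>?x\<bar> * \<bar>det Q\<bar>)"
        using lower detA D01 by (simp add: abs_mult)
      ultimately have "1 \<le> of_int D0 ^ Suc d * (\<bar>?x\<bar> * (P * (V * (H * K1) ^ d)))" by linarith
      then have "1 \<le> \<bar>?x\<bar> * H ^ d * (of_int D0 ^ Suc d * P * V * K1 ^ d)"
        by (simp add: power_mult_distrib algebra_simps)
      then have "1 / (of_int D0 ^ Suc d * P * V * K1 ^ d) \<le> \<bar>?x\<bar> * H ^ d"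
        using D01 P1 V1 K11 by (simp add: divide_le_eq)
      then have "c \<le> \<bar>?x\<bar> * H ^ d" unfolding c_def by linarith
      then show ?thesis using Hd unfolding d_def by (simp add: divide_le_eq)
    qed
  qed
qed

end


context alg
begin

lemma simul:
  "\<exists>c2>0. \<forall>N. N \<ge> 1 \<longrightarrow> c2 \<le> real N * (tn \<alpha> N) ^ CARD('n)"
proof -
  obtain c1 where c1: "c1 > 0" "\<forall>(t::int) (h::'n \<Rightarrow> int) (H::real). H \<ge> 1 \<longrightarrow> (\<forall>j. \<bar>real_of_int (h j)\<bar> \<le> H) \<longrightarrow> (\<exists>j. h j \<noteq> 0)
      \<longrightarrow> c1 / H ^ CARD('n) \<le> \<bar>of_int t + (\<Sum>j\<in>UNIV. of_int (h j) * \<alpha>$j)\<bar>"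
    using linform by blast
  define d where "d = CARD('n)"
  have d1: "d \<ge> 1" unfolding d_def by (simp add: Suc_leI)
  define c2 where "c2 = (c1 / real d) ^ d"
  have c2pos: "c2 > 0" unfolding c2_def using c1 d1 by simp
  show ?thesis
  proof (intro exI[of _ c2] conjI c2pos allI impI)
    fix N :: nat assume N1: "N \<ge> 1"
    define \<delta> where "\<delta> = tn \<alpha> N"
    have \<delta>pos: "\<delta> > 0" unfolding \<delta>_def by (rule rat_lin_indep_pos[OF li N1])
    define z where "z = (\<lambda>j. round (real N * \<alpha>$j))"
    have zb: "\<bar>real N * \<alpha>$j - of_int (z j)\<bar> \<le> \<delta>" for j
      using tn_comp[of N \<alpha> j] unfolding \<delta>_def z_def int_dist_eq by simp
    define H where "H = (LEAST H::nat. N < (H+1)^d)"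
    have Hex: "N < (N+1)^d"
    proof -
      have "N < N + 1" by simp
      also have "\<dots> \<le> (N+1)^d" using d1 by (simp add: self_le_power)
      finally show ?thesis .
    qed
    have HN: "N < (H+1)^d" unfolding H_def by (rule LeastI[of "\<lambda>H. N < (H+1)^d", OF Hex])
    have H1: "H \<ge> 1"
    proof (rule ccontr)
      assume "\<not> H \<ge> 1" then have "H = 0" by simp
      then show False using HN N1 by simp
    qed
    have HdN: "H^d \<le> N"
    proof -
      have "H - 1 < H" using H1 by simp
      then have "\<not> N < (H - 1 + 1)^d" unfolding H_def by (rule not_less_Least)
      then show ?thesis using H1 by simp
    qed
    define Dom where "Dom = PiE (UNIV::'n set) (\<lambda>_. {0..int H})"
    define f where "f = (\<lambda>h::'n \<Rightarrow> int. (\<Sum>j\<in>UNIV. h j * z j) mod int N)"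
    have cardDom: "card Dom = (H+1)^d"
    proof -
      have "nat (int H + 1) = Suc H" by simp
      then show ?thesis unfolding Dom_def d_def by (simp add: card_PiE)
    qed
    have fimg: "f ` Dom \<subseteq> {0..<int N}" unfolding f_def using N1 by auto
    have "\<not> inj_on f Dom"
    proof
      assume "inj_on f Dom"
      from card_inj_on_le[OF this fimg] have "card Dom \<le> N" by simp
      then show False using HN cardDom by simp
    qed
    then obtain h1 h2 where hh: "h1 \<in> Dom" "h2 \<in> Dom" "h1 \<noteq> h2" "f h1 = f h2"
      unfolding inj_on_def by blast
    define g where "g = (\<lambda>j. h1 j - h2 j)"
    have gnz: "\<exists>j. g j \<noteq> 0"
    proof (rule ccontr)
      assume "\<not> (\<exists>j. g j \<noteq> 0)"
      then have "h1 = h2" unfolding g_def by auto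
      then show False using hh by simp
    qed
    have gH: "\<bar>real_of_int (g j)\<bar> \<le> real H" for j
    proof -
      have "h1 j \<in> {0..int H}" "h2 j \<in> {0..int H}" using hh unfolding Dom_def by auto
      then have "\<bar>g j\<bar> \<le> int H" unfolding g_def by auto
      then show ?thesis by linarith
    qed
    have "int N dvd (\<Sum>j\<in>UNIV. h1 j * z j) - (\<Sum>j\<in>UNIV. h2 j * z j)"
      using hh(4) unfolding f_def by (simp add: mod_eq_dvd_iff)
    then obtain u where u: "(\<Sum>j\<in>UNIV. g j * z j) = int N * u"
      unfolding g_def by (auto simp: sum_subtractf left_diff_distrib elim!: dvdE)
    let ?x = "of_int (- u) + (\<Sum>j\<in>UNIV. of_int (g j) * \<alpha>$j)"
    have lb: "c1 / real H ^ CARD('n) \<le> \<bar>?x\<bar>"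
    proof -
      have "real H \<ge> 1" using H1 by simp
      then show ?thesis using c1(2)[rule_format, of "real H" g "- u"] gH gnz by blast
    qed
    have Nx: "real N * ?x = (\<Sum>j\<in>UNIV. of_int (g j) * (real N * \<alpha>$j - of_int (z j)))"
    proof -
      have "real N * ?x = (\<Sum>j\<in>UNIV. of_int (g j) * (real N * \<alpha>$j)) - real N * of_int u"
        by (simp add: algebra_simps sum_distrib_left)
      also have "real N * of_int u = (\<Sum>j\<in>UNIV. of_int (g j) * of_int (z j))"
        using arg_cong[OF u, of real_of_int] by simp
      finally show ?thesis by (simp add: algebra_simps sum_subtractf)
    qed
    have "\<bar>real N * ?x\<bar> \<le> (\<Sum>j\<in>(UNIV::'n set). real H * \<delta>)"
    proof -
      have "\<bar>real N * ?x\<bar> \<le> (\<Sum>j\<in>UNIV. \<bar>of_int (g j) * (real N * \<alpha>$j - of_int (z j))\<bar>)"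
        unfolding Nx by (rule sum_abs)
      also have "\<dots> \<le> (\<Sum>j\<in>(UNIV::'n set). real H * \<delta>)"
        by (rule sum_mono) (auto simp: abs_mult intro!: mult_mono gH zb)
      finally show ?thesis .
    qed
    also have "\<dots> = real d * real H * \<delta>" unfolding d_def by simp
    finally have ub: "real N * \<bar>?x\<bar> \<le> real d * real H * \<delta>" by (simp add: abs_mult)
    have Hpos: "real H > 0" using H1 by simp
    have "c1 * real N \<le> real d * real H ^ Suc d * \<delta>"
    proof -
      have "c1 \<le> \<bar>?x\<bar> * real H ^ d" using lb Hpos unfolding d_def by (simp add: divide_le_eq)
      then have "c1 * real N \<le> (\<bar>?x\<bar> * real H ^ d) * real N" by (rule mult_right_mono) simp
      also have "\<dots> = real N * \<bar>?x\<bar> * real H ^ d" by simp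
      also have "\<dots> \<le> real d * real H * \<delta> * real H ^ d" using ub Hpos by (simp add: mult_right_mono)
      finally show ?thesis by (simp add: algebra_simps)
    qed
    then have "(c1 * real N) ^ d \<le> (real d * real H ^ Suc d * \<delta>) ^ d"
      using c1 by (intro power_mono) auto
    also have "\<dots> = real d ^ d * (real H ^ d) ^ Suc d * \<delta> ^ d"
      by (simp add: power_mult_distrib power_mult[symmetric] mult.commute)
    also have "\<dots> \<le> real d ^ d * (real N) ^ Suc d * \<delta> ^ d"
    proof -
      have "real H ^ d \<le> real N" using HdN by (metis of_nat_le_iff of_nat_power)
      then have "(real H ^ d) ^ Suc d \<le> (real N) ^ Suc d" by (intro power_mono) auto
      then show ?thesis using \<delta>pos by (intro mult_right_mono mult_left_mono) auto
    qed
    finally have "c1 ^ d * real N ^ d \<le> real d ^ d * real N ^ Suc d * \<delta> ^ d"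
      by (simp add: power_mult_distrib)
    then have "c1 ^ d \<le> real d ^ d * (real N * \<delta> ^ d)"
      using N1 by (simp add: algebra_simps)
    then have "(c1 / real d) ^ d \<le> real N * \<delta> ^ d"
      using d1 by (simp add: power_divide divide_le_eq mult.commute)
    then show "c2 \<le> real N * (tn \<alpha> N) ^ CARD('n)" unfolding c2_def \<delta>_def d_def .
  qed
qed

end


definition Lat :: "nat \<Rightarrow> int^'n::finite \<Rightarrow> (real^'n) set" where
  "Lat N z = {v. \<exists>k::int. \<forall>j. v$j - of_int k * of_int (z$j) / real N \<in> \<int>}"

lemma Lat_diff: "u \<in> Lat N z \<Longrightarrow> v \<in> Lat N z \<Longrightarrow> u - v \<in> Lat N z"
proof -
  assume "u \<in> Lat N z" "v \<in> Lat N z"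
  then obtain k k' where k: "\<forall>j. u$j - of_int k * of_int (z$j) / real N \<in> \<int>"
    and k': "\<forall>j. v$j - of_int k' * of_int (z$j) / real N \<in> \<int>" unfolding Lat_def by blast
  have "(u - v)$j - of_int (k - k') * of_int (z$j) / real N =
     (u$j - of_int k * of_int (z$j) / real N) - (v$j - of_int k' * of_int (z$j) / real N)" for j
    by (simp add: algebra_simps diff_divide_distrib)
  then have "\<forall>j. (u - v)$j - of_int (k - k') * of_int (z$j) / real N \<in> \<int>"
    using k k' by (metis Ints_diff)
  then show ?thesis unfolding Lat_def by blast
qed

lemma Lat_add: "u \<in> Lat N z \<Longrightarrow> v \<in> Lat N z \<Longrightarrow> u + v \<in> Lat N z"
proof -
  assume "u \<in> Lat N z" "v \<in> Lat N z"
  then obtain k k' where k: "\<forall>j. u$j - of_int k * of_int (z$j) / real N \<in> \<int>"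
    and k': "\<forall>j. v$j - of_int k' * of_int (z$j) / real N \<in> \<int>" unfolding Lat_def by blast
  have "(u + v)$j - of_int (k + k') * of_int (z$j) / real N =
     (u$j - of_int k * of_int (z$j) / real N) + (v$j - of_int k' * of_int (z$j) / real N)" for j
    by (simp add: algebra_simps add_divide_distrib)
  then have "\<forall>j. (u + v)$j - of_int (k + k') * of_int (z$j) / real N \<in> \<int>"
    using k k' by (metis Ints_add)
  then show ?thesis unfolding Lat_def by blast
qed

lemma Lat_zero: "0 \<in> Lat N z"
  unfolding Lat_def by (rule CollectI, rule exI[of _ 0]) simp

lemma Lat_minus: "u \<in> Lat N z \<Longrightarrow> - u \<in> Lat N z"
  using Lat_diff[OF Lat_zero] by fastforce

definition lpt :: "nat \<Rightarrow> int^'n::finite \<Rightarrow> nat \<Rightarrow> real^'n" where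
  "lpt N z n = (\<chi> j. frac (of_nat n * of_int (z$j) / of_nat N))"

lemma rank1_lattice_eq: "rank1_lattice N z = lpt N z ` {..<N}"
  unfolding rank1_lattice_def lpt_def by auto

lemma lpt_Lat: "lpt N z n \<in> Lat N z"
proof -
  have "\<forall>j. lpt N z n $ j - of_int (int n) * of_int (z$j) / real N \<in> \<int>"
  proof
    fix j
    have "lpt N z n $ j - of_int (int n) * of_int (z$j) / real N = - of_int \<lfloor>of_nat n * of_int (z$j) / real N\<rfloor>"
      unfolding lpt_def frac_def by simp
    then show "lpt N z n $ j - of_int (int n) * of_int (z$j) / real N \<in> \<int>" by simp
  qed
  then show ?thesis unfolding Lat_def by blast
qed

lemma lpt_cube: "lpt N z n \<in> unit_cube"
  unfolding unit_cube_def lpt_def by (auto simp: frac_ge_0 frac_lt_1 less_imp_le)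

locale lat =
  fixes \<alpha> :: "real^'n::finite" and N :: nat and z :: "int^'n"
  assumes N1: "N \<ge> 1"
    and dpos: "tn \<alpha> N > 0"
    and BA: "\<forall>M. 1 \<le> M \<and> M < N \<longrightarrow> tn \<alpha> N < tn \<alpha> M"
    and zb: "\<forall>j. \<bar>real N * \<alpha>$j - of_int (z$j)\<bar> \<le> tn \<alpha> N"
begin

abbreviation "\<delta> \<equiv> tn \<alpha> N"

lemma mult_close: "int_dist (of_int m * \<alpha>$j) \<le> int_dist (of_int m * of_int (z$j) / real N) + \<bar>of_int m\<bar> * \<delta> / real N"
proof -
  have "of_int m * \<alpha>$j = of_int m * of_int (z$j) / real N + of_int m * (real N * \<alpha>$j - of_int (z$j)) / real N"
    using N1 by (simp add: field_simps)
  then have "int_dist (of_int m * \<alpha>$j) \<le> int_dist (of_int m * of_int (z$j) / real N) + \<bar>of_int m * (real N * \<alpha>$j - of_int (z$j)) / real N\<bar>"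
    by (metis int_dist_add_le)
  also have "\<bar>of_int m * (real N * \<alpha>$j - of_int (z$j)) / real N\<bar> \<le> \<bar>of_int m\<bar> * \<delta> / real N"
    using zb N1 by (simp add: abs_mult divide_right_mono mult_left_mono)
  finally show ?thesis by simp
qed

lemma tn_int: "M \<ge> 1 \<Longrightarrow> tn \<alpha> M = torus_norm ((of_int (int M)) *\<^sub>R \<alpha>)"
  by simp

lemma no_int_mult:
  fixes m :: int
  assumes "m \<noteq> 0" "\<bar>m\<bar> < int N"
  shows "\<not> (\<forall>j. of_int m * of_int (z$j) / real N \<in> \<int>)"
proof
  assume I: "\<forall>j. of_int m * of_int (z$j) / real N \<in> \<int>"
  define M where "M = nat \<bar>m\<bar>"
  have M1: "1 \<le> M" "M < N" using assms unfolding M_def by auto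
  have "\<forall>j. int_dist ((of_nat M *\<^sub>R \<alpha>)$j) < \<delta>"
  proof
    fix j
    have "int_dist ((of_nat M *\<^sub>R \<alpha>)$j) = int_dist (of_int m * \<alpha>$j)"
    proof (cases "m \<ge> 0")
      case True then show ?thesis unfolding M_def by simp
    next
      case False
      then have "of_nat M * \<alpha>$j = - (of_int m * \<alpha>$j)" unfolding M_def by simp
      then show ?thesis by (simp add: int_dist_minus)
    qed
    also have "\<dots> \<le> int_dist (of_int m * of_int (z$j) / real N) + \<bar>of_int m\<bar> * \<delta> / real N"
      by (rule mult_close)
    also have "int_dist (of_int m * of_int (z$j) / real N) = 0" using I by (simp add: int_dist_zero_Ints)
    also have "\<bar>of_int m\<bar> * \<delta> / real N < \<delta>"
    proof -
      have "\<bar>of_int m\<bar> < real N" using assms by linarith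
      then have "\<bar>of_int m\<bar> * \<delta> < real N * \<delta>" using dpos by (simp add: mult_strict_right_mono)
      then show ?thesis using N1 by (simp add: divide_less_eq mult.commute)
    qed
    finally show "int_dist ((of_nat M *\<^sub>R \<alpha>)$j) < \<delta>" by simp
  qed
  then have "tn \<alpha> M < \<delta>" using torus_norm_less_iff by blast
  then show False using BA M1 by force
qed

lemma frac_eq_Ints: assumes "frac a = frac b" shows "a - b \<in> \<int>"
proof -
  have "a - b = of_int (\<lfloor>a\<rfloor> - \<lfloor>b\<rfloor>)" using assms unfolding frac_def by simp
  then show ?thesis by simp
qed

lemma lpt_inj: "inj_on (lpt N z) {..<N}"
proof (rule inj_onI)
  fix n n' assume nn: "n \<in> {..<N}" "n' \<in> {..<N}" "lpt N z n = lpt N z n'"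
  show "n = n'"
  proof (rule ccontr)
    assume ne: "n \<noteq> n'"
    define m where "m = int n - int n'"
    have "m \<noteq> 0" "\<bar>m\<bar> < int N" using ne nn unfolding m_def by auto
    moreover have "\<forall>j. of_int m * of_int (z$j) / real N \<in> \<int>"
    proof
      fix j
      have "frac (of_nat n * of_int (z$j) / of_nat N :: real) = frac (of_nat n' * of_int (z$j) / of_nat N)"
        using arg_cong[OF nn(3), of "\<lambda>v. v$j"] unfolding lpt_def by simp
      then have "of_nat n * of_int (z$j) / of_nat N - of_nat n' * of_int (z$j) / of_nat N \<in> (\<int>::real set)"
        by (rule frac_eq_Ints)
      then show "of_int m * of_int (z$j) / real N \<in> \<int>"
        unfolding m_def by (simp add: diff_divide_distrib left_diff_distrib)
    qed
    ultimately show False using no_int_mult by blast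
  qed
qed

lemma card_P: "card (rank1_lattice N z) = N"
  unfolding rank1_lattice_eq using card_image[OF lpt_inj] by simp

lemma admissible: "rank1_admissible N z"
proof -
  define g where "g = Gcd (insert (int N) (range (\<lambda>j. z$j)))"
  have gN: "g dvd int N" unfolding g_def by (rule Gcd_dvd) simp
  have gz: "g dvd z$j" for j unfolding g_def by (rule Gcd_dvd) simp
  have g0: "g \<ge> 0" unfolding g_def by simp
  have gne: "g \<noteq> 0" using gN N1 by auto
  show ?thesis
  proof (rule ccontr)
    assume "\<not> rank1_admissible N z"
    then have "g \<noteq> 1" unfolding rank1_admissible_def g_def by simp
    then have g2: "g \<ge> 2" using g0 gne by linarith
    obtain M' where M': "int N = g * M'" using gN by (auto elim: dvdE)
    have "g * M' > 0" using M' N1 by simp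
    then have "M' > 0" using g2 by (simp add: zero_less_mult_iff)
    then have M'pos: "M' \<ge> 1" by simp
    define M where "M = nat M'"
    have "g * M' \<ge> 2 * M'" using g2 M'pos by (intro mult_right_mono) auto
    then have NM2: "int N \<ge> 2 * M'" using M' by simp
    have M1: "M \<ge> 1" "M < N" unfolding M_def using NM2 M'pos by linarith+
    have "\<forall>j. int_dist ((of_nat M *\<^sub>R \<alpha>)$j) < \<delta>"
    proof
      fix j
      obtain zz where zz: "z$j = g * zz" using gz by (auto elim: dvdE)
      have gr: "real_of_int g \<ge> 2" using g2 by simp
      have NM: "real N = real_of_int g * real M" using M' M'pos unfolding M_def
        by (metis of_int_mult of_int_of_nat_eq of_nat_nat order_trans zero_le_one)
      have "(of_nat M *\<^sub>R \<alpha>)$j = of_int zz + (real N * \<alpha>$j - of_int (z$j)) / of_int g"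
        using gr NM zz by (simp add: field_simps)
      then have "int_dist ((of_nat M *\<^sub>R \<alpha>)$j) \<le> \<bar>(real N * \<alpha>$j - of_int (z$j)) / of_int g\<bar>"
        by (metis add.commute int_dist_le_abs int_dist_shift)
      also have "\<dots> \<le> \<delta> / of_int g" using zb gr by (simp add: divide_right_mono)
      also have "\<dots> < \<delta>" using gr dpos by (simp add: divide_less_eq)
      finally show "int_dist ((of_nat M *\<^sub>R \<alpha>)$j) < \<delta>" .
    qed
    then have "tn \<alpha> M < \<delta>" using torus_norm_less_iff by blast
    then show False using BA M1 by force
  qed
qed

lemma lat_sep:
  assumes v: "v \<in> Lat N z" "v \<noteq> 0"
  shows "\<exists>j. \<bar>v$j\<bar> \<ge> \<delta> / 2"
proof -
  obtain k where k: "\<forall>j. v$j - of_int k * of_int (z$j) / real N \<in> \<int>" using v unfolding Lat_def by blast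
  define r where "r = k mod int N"
  have r: "0 \<le> r" "r < int N" using N1 unfolding r_def by auto
  obtain q where kq: "k = int N * q + r" unfolding r_def by (metis div_mult_mod_eq mult.commute)
  have dhalf: "\<delta> \<le> 1/2" by (rule torus_norm_half)
  show ?thesis
  proof (cases "r = 0")
    case True
    then have vi: "v$j \<in> \<int>" for j
    proof -
      have "of_int k * of_int (z$j) / real N = of_int (q * z$j)" using kq True N1 by simp
      then show ?thesis using k by (metis Ints_of_int Ints_diff diff_add_cancel Ints_add)
    qed
    obtain j where "v$j \<noteq> 0" using v(2) by (metis vec_eq_iff zero_index)
    then have "\<bar>v$j\<bar> \<ge> 1" using vi by (simp add: Ints_nonzero_abs_ge1)
    then show ?thesis using dhalf by (intro exI[of _ j]) linarith
  next
    case False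
    define m where "m = (if 2 * r \<le> int N then r else r - int N)"
    have m0: "m \<noteq> 0" "2 * \<bar>m\<bar> \<le> int N" "\<bar>m\<bar> < int N" using False r unfolding m_def by auto
    obtain q' where kq': "k = int N * q' + m"
    proof (cases "2 * r \<le> int N")
      case True
      then show ?thesis using kq that[of q] unfolding m_def by simp
    next
      case False
      then have "k = int N * (q + 1) + m" using kq unfolding m_def by (simp add: algebra_simps)
      then show ?thesis using that by blast
    qed
    have vm: "v$j - of_int m * of_int (z$j) / real N \<in> \<int>" for j
    proof -
      have "v$j - of_int m * of_int (z$j) / real N = (v$j - of_int k * of_int (z$j) / real N) + of_int (q' * z$j)"
        using kq' N1 by (simp add: field_simps)
      then show ?thesis using k by (metis Ints_of_int Ints_add)
    qed
    define M where "M = nat \<bar>m\<bar>"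
    have M1: "1 \<le> M" "M < N" using m0 unfolding M_def by auto
    obtain j where j: "tn \<alpha> M = int_dist ((of_nat M *\<^sub>R \<alpha>)$j)" using torus_norm_ex by blast
    have "int_dist ((of_nat M *\<^sub>R \<alpha>)$j) = int_dist (of_int m * \<alpha>$j)"
    proof (cases "m \<ge> 0")
      case True then show ?thesis unfolding M_def by simp
    next
      case False
      then have "of_nat M * \<alpha>$j = - (of_int m * \<alpha>$j)" unfolding M_def by simp
      then show ?thesis by (simp add: int_dist_minus)
    qed
    then have "tn \<alpha> M \<le> int_dist (of_int m * of_int (z$j) / real N) + \<bar>of_int m\<bar> * \<delta> / real N"
      using j mult_close by simp
    moreover have "\<bar>of_int m\<bar> * \<delta> / real N \<le> \<delta> / 2"
    proof -
      have "2 * \<bar>of_int m\<bar> \<le> real N" using m0 by linarith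
      then have "2 * \<bar>of_int m\<bar> * \<delta> \<le> real N * \<delta>" using dpos by (simp add: mult_right_mono)
      then show ?thesis using N1 by (simp add: field_simps)
    qed
    moreover have "int_dist (of_int m * of_int (z$j) / real N) = int_dist (v$j)"
    proof -
      obtain a where a: "v$j - of_int m * of_int (z$j) / real N = of_int a" using vm[of j] by (metis Ints_cases)
      then have "v$j = of_int m * of_int (z$j) / real N + of_int a" by simp
      then show ?thesis by (simp add: int_dist_shift)
    qed
    moreover have "\<delta> < tn \<alpha> M" using BA M1 by blast
    ultimately have "int_dist (v$j) > \<delta> / 2" by linarith
    then have "\<bar>v$j\<bar> \<ge> \<delta> / 2" using int_dist_le_abs[of "v$j"] by linarith
    then show ?thesis by blast
  qed
qed

lemma lat_norm:
  assumes "v \<in> Lat N z" "v \<noteq> 0"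
  shows "norm v \<ge> \<delta> / 2"
proof -
  obtain j where "\<bar>v$j\<bar> \<ge> \<delta> / 2" using lat_sep[OF assms] by blast
  moreover have "\<bar>v$j\<bar> \<le> norm v" by (rule component_le_norm_cart)
  ultimately show ?thesis by linarith
qed

end


context lat
begin

lemma Kset:
  assumes r: "r > 0" and sep: "\<forall>v\<in>Lat N z. v \<noteq> 0 \<longrightarrow> norm v \<ge> 2 * r"
    and x1: "norm x \<le> D + r/4" and x2: "\<forall>v\<in>Lat N z. norm (x - v) \<ge> D"
    and lam: "l \<in> Lat N z" "l = t *\<^sub>R x + w" "\<bar>t\<bar> \<le> 1" "norm w \<le> r/2"
  shows "l = 0"
proof (rule ccontr)
  assume l0: "l \<noteq> 0"
  have n1: "norm l \<ge> 2 * r" using sep lam(1) l0 by blast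
  show False
  proof (cases "\<bar>t\<bar> * norm x < r")
    case True
    have "norm l \<le> norm (t *\<^sub>R x) + norm w" unfolding lam(2) by (rule norm_triangle_ineq)
    also have "\<dots> < 2 * r" using True lam(4) r by (simp only: norm_scaleR)
    finally show False using n1 by simp
  next
    case False
    then have tx: "\<bar>t\<bar> * norm x \<ge> r" by simp
    show False
    proof (cases "t \<ge> 0")
      case True
      have "x - l = (1 - t) *\<^sub>R x - w" unfolding lam(2) by (simp add: algebra_simps)
      then have "norm (x - l) \<le> norm ((1 - t) *\<^sub>R x) + norm w" by (metis norm_triangle_ineq4)
      also have "norm ((1 - t) *\<^sub>R x) = (1 - t) * norm x" using True lam(3) by simp
      finally have "norm (x - l) \<le> norm x - t * norm x + r/2" using lam(4) by (simp add: algebra_simps)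
      then have "norm (x - l) < D" using tx True x1 r by simp
      then show False using x2 lam(1) by fastforce
    next
      case False
      have ml: "- l \<in> Lat N z" using lam(1) by (rule Lat_minus)
      have "x - (- l) = (1 + t) *\<^sub>R x + w" unfolding lam(2) by (simp add: algebra_simps)
      then have "norm (x - (- l)) \<le> norm ((1 + t) *\<^sub>R x) + norm w" by (metis norm_triangle_ineq)
      also have "norm ((1 + t) *\<^sub>R x) = (1 + t) * norm x" using False lam(3) by simp
      finally have "norm (x - (- l)) \<le> norm x + t * norm x + r/2" using lam(4) by (simp add: algebra_simps)
      moreover have "t * norm x \<le> - r" using tx False by simp
      ultimately have "norm (x - (- l)) < D" using x1 r by simp
      then show False using x2 ml by fastforce
    qed
  qed
qed

lemma count_bound:
  fixes M :: nat and A :: "('n \<Rightarrow> int) set"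
  assumes M1: "M \<ge> 1" and finA: "finite A"
    and dist: "\<forall>a\<in>A. \<forall>b\<in>A. (\<chi> j. of_int (a j - b j) / real (M * N)) \<in> Lat N z \<longrightarrow> a = b"
  shows "card A * N \<le> (M * N) ^ CARD('n)"
proof -
  define G where "G = M * N"
  have G1: "G \<ge> 1" using M1 N1 unfolding G_def by simp
  define \<phi> where "\<phi> = (\<lambda>(a::'n \<Rightarrow> int, n::nat). (\<lambda>j. (a j + int n * int M * z$j) mod int G))"
  have img: "\<phi> ` (A \<times> {..<N}) \<subseteq> PiE UNIV (\<lambda>_. {0..<int G})"
    unfolding \<phi>_def using G1 by auto
  have inj: "inj_on \<phi> (A \<times> {..<N})"
  proof (rule inj_onI)
    fix p q assume p: "p \<in> A \<times> {..<N}" and q: "q \<in> A \<times> {..<N}" and pq: "\<phi> p = \<phi> q"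
    obtain a n where an: "p = (a, n)" "a \<in> A" "n < N" using p by auto
    obtain b n' where bn: "q = (b, n')" "b \<in> A" "n' < N" using q by auto
    have cj: "\<exists>c. (a j - b j) + (int n - int n') * int M * z$j = int G * c" for j
    proof -
      have "(a j + int n * int M * z$j) mod int G = (b j + int n' * int M * z$j) mod int G"
        using fun_cong[OF pq, of j] unfolding an bn \<phi>_def by simp
      then have "int G dvd (a j + int n * int M * z$j) - (b j + int n' * int M * z$j)"
        by (simp add: mod_eq_dvd_iff)
      then obtain c where "(a j + int n * int M * z$j) - (b j + int n' * int M * z$j) = int G * c"
        by (auto elim: dvdE)
      then show ?thesis by (intro exI[of _ c]) (simp add: algebra_simps)
    qed
    then obtain c where c: "\<And>j. (a j - b j) + (int n - int n') * int M * z$j = int G * c j" by metis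
    have Gr: "real G = real M * real N" unfolding G_def by simp
    have Mpos: "real M > 0" "real N > 0" using M1 N1 by auto
    have key: "of_int (a j - b j) / real G + of_int (int n - int n') * of_int (z$j) / real N = of_int (c j)" for j
    proof -
      have e: "of_int (a j - b j) + of_int (int n - int n') * real M * of_int (z$j) = real G * of_int (c j)"
        using arg_cong[OF c[of j], of real_of_int] by simp
      have e2: "of_int (int n - int n') * of_int (z$j) / real N = of_int (int n - int n') * real M * of_int (z$j) / real G"
        using Mpos unfolding Gr by (simp add: field_simps)
      have "of_int (a j - b j) / real G + of_int (int n - int n') * of_int (z$j) / real N
          = (of_int (a j - b j) + of_int (int n - int n') * real M * of_int (z$j)) / real G"
        unfolding e2 by (simp add: add_divide_distrib)
      also have "\<dots> = of_int (c j)" unfolding e using Mpos unfolding Gr by simp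
      finally show ?thesis .
    qed
    have "(\<chi> j. of_int (a j - b j) / real (M * N)) \<in> Lat N z"
    proof -
      have "\<forall>j. (\<chi> j. of_int (a j - b j) / real (M * N)) $ j - of_int (int n' - int n) * of_int (z$j) / real N \<in> \<int>"
      proof
        fix j
        have "(\<chi> j. of_int (a j - b j) / real (M * N)) $ j - of_int (int n' - int n) * of_int (z$j) / real N
          = of_int (a j - b j) / real G + of_int (int n - int n') * of_int (z$j) / real N"
        proof -
          have "of_int (int n' - int n) = - (of_int (int n - int n')::real)" by simp
          then show ?thesis unfolding G_def by (simp only: vec_lambda_beta minus_mult_left minus_divide_left diff_minus_eq_add)
        qed
        then show "(\<chi> j. of_int (a j - b j) / real (M * N)) $ j - of_int (int n' - int n) * of_int (z$j) / real N \<in> \<int>"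
          using key by simp
      qed
      then show ?thesis unfolding Lat_def by blast
    qed
    then have ab: "a = b" using dist an bn by blast
    have "n = n'"
    proof (rule ccontr)
      assume "n \<noteq> n'"
      then have m0: "int n - int n' \<noteq> 0" "\<bar>int n - int n'\<bar> < int N" using an bn by auto
      have "\<forall>j. of_int (int n - int n') * of_int (z$j) / real N \<in> \<int>"
        using key ab by simp
      then show False using no_int_mult[OF m0] by blast
    qed
    then show "p = q" using an bn ab by simp
  qed
  have "card (A \<times> {..<N}) \<le> card (PiE (UNIV::'n set) (\<lambda>_. {0..<int G}))"
    by (rule card_inj_on_le[OF inj img]) (simp add: finite_PiE)
  moreover have "nat (int M * int N) = M * N" by (metis nat_int of_nat_mult)
  ultimately show ?thesis unfolding G_def by (simp add: card_PiE card_cartesian_product)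
qed

end


context lat
begin

lemma deep_bound:
  assumes r: "r > 0" and sep: "\<forall>v\<in>Lat N z. v \<noteq> 0 \<longrightarrow> norm v \<ge> 2 * r"
    and x1: "norm x \<le> D + r/4" and x2: "\<forall>v\<in>Lat N z. norm (x - v) \<ge> D"
  shows "D \<le> 2 * real CARD('n) * (8 * real CARD('n) / r) ^ (CARD('n) - 1) / real N"
proof -
  define d where "d = CARD('n)"
  define d' where "d' = d - 1"
  have dd: "d = Suc d'" unfolding d'_def d_def by simp
  have d1: "real d \<ge> 1" unfolding d_def by (simp add: Suc_leI)
  have Npos: "real N > 0" using N1 by simp
  have Bd0: "0 \<le> 2 * real d * (8 * real d / r) ^ d' / real N" using r d1 by simp
  have Dx: "D \<le> norm x" using x2 Lat_zero by fastforce
  obtain j0 where j0: "\<bar>x$j0\<bar> = Max (range (\<lambda>j. \<bar>x$j\<bar>))"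
  proof -
    have "Max (range (\<lambda>j. \<bar>x$j\<bar>)) \<in> range (\<lambda>j. \<bar>x$j\<bar>)" by (rule Max_in) auto
    then show ?thesis using that by (metis (no_types, lifting) imageE)
  qed
  have jmax: "\<bar>x$j\<bar> \<le> \<bar>x$j0\<bar>" for j unfolding j0 by (rule Max_ge) auto
  define X where "X = \<bar>x$j0\<bar>"
  have nX: "norm x \<le> real d * X"
  proof -
    have "norm x \<le> (\<Sum>j\<in>UNIV. \<bar>x$j\<bar>)" by (rule norm_le_l1_cart)
    also have "\<dots> \<le> (\<Sum>j\<in>(UNIV::'n set). X)" unfolding X_def by (rule sum_mono) (rule jmax)
    also have "\<dots> = real d * X" unfolding d_def by simp
    finally show ?thesis .
  qed
  show ?thesis
  proof (cases "X = 0")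
    case True
    then have "D \<le> 0" using Dx nX by simp
    then show ?thesis using Bd0 unfolding d_def d'_def by linarith
  next
    case False
    then have Xpos: "X > 0" unfolding X_def by simp
    have xj0: "x$j0 \<noteq> 0" using False unfolding X_def by simp
    define s where "s = r / (4 * real d)"
    have spos: "s > 0" unfolding s_def using r d1 by simp
    define M where "M = nat \<lceil>2 / (s * real N)\<rceil> + 1"
    have M1: "M \<ge> 1" unfolding M_def by simp
    have Mge: "real M \<ge> 2 / (s * real N)"
    proof -
      have "2 / (s * real N) \<le> of_int \<lceil>2 / (s * real N)\<rceil>" by (rule le_of_int_ceiling)
      also have "\<dots> \<le> real (nat \<lceil>2 / (s * real N)\<rceil>)" by simp
      finally show ?thesis unfolding M_def by simp
    qed
    define G where "G = M * N"
    have Gr: "real G = real M * real N" unfolding G_def by simp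
    have sG: "s * real G \<ge> 2"
    proof -
      have "2 = (2 / (s * real N)) * (s * real N)" using spos Npos by simp
      also have "\<dots> \<le> real M * (s * real N)" using Mge spos Npos by (intro mult_right_mono) auto
      finally show ?thesis unfolding Gr by (simp add: algebra_simps)
    qed
    have Gpos: "real G > 0" using sG spos by (smt (verit) mult_nonneg_nonpos of_nat_0_le_iff)
    define K where "K = nat \<lfloor>s * real G\<rfloor>"
    have Kle: "real K \<le> s * real G" unfolding K_def using sG by simp
    have Kge: "real K \<ge> s * real G / 2"
    proof -
      have "s * real G < of_int \<lfloor>s * real G\<rfloor> + 1" by (rule real_of_int_floor_add_one_gt)
      moreover have "real K = of_int \<lfloor>s * real G\<rfloor>" unfolding K_def using sG by simp
      ultimately show ?thesis using sG by linarith
    qed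
    have K1: "real K \<ge> 1" using Kge sG by linarith
    have KG: "real K / real G \<le> s" using Kle Gpos by (simp add: divide_le_eq)
    have iG: "1 / real G \<le> s" using sG Gpos spos by (simp add: divide_le_eq) 
    define A0 where "A0 = nat \<lfloor>real G * X / (2 * real K)\<rfloor>"
    have A0ge: "real A0 + 1 \<ge> real G * X / (2 * real K)"
    proof -
      have nn: "real G * X / (2 * real K) \<ge> 0" using Gpos Xpos K1 by simp
      have "real G * X / (2 * real K) < of_int \<lfloor>real G * X / (2 * real K)\<rfloor> + 1" by (rule real_of_int_floor_add_one_gt)
      moreover have "real A0 = of_int \<lfloor>real G * X / (2 * real K)\<rfloor>" unfolding A0_def using nn by simp
      ultimately show ?thesis by linarith
    qed
    have A0le: "real A0 \<le> real G * X / (2 * real K)"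
    proof -
      have nn: "real G * X / (2 * real K) \<ge> 0" using Gpos Xpos K1 by simp
      have "real A0 = of_int \<lfloor>real G * X / (2 * real K)\<rfloor>" unfolding A0_def using nn by simp
      then show ?thesis by simp
    qed
    define ptf where "ptf = (\<lambda>(a::nat) (b::'n \<Rightarrow> int). (\<lambda>j. \<lfloor>real a * real K * x$j / x$j0\<rfloor> + b j))"
    define I where "I = {..A0} \<times> PiE (UNIV::'n set) (\<lambda>_. {0..<int K})"
    define f where "f = (\<lambda>(a, b). ptf a b)"
    define t where "t = (\<lambda>a::nat. real a * real K / (real G * x$j0))"
    define wv where "wv = (\<lambda>a b. (\<chi> j. of_int (ptf a b j) / real G) - t a *\<^sub>R x)"
    have ptf0: "ptf a b j0 = int a * int K + b j0" for a b
    proof -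
      have "real a * real K * x$j0 / x$j0 = of_int (int a * int K)" using xj0 by simp
      then have "\<lfloor>real a * real K * x$j0 / x$j0\<rfloor> = int a * int K" by (simp only: floor_of_int)
      then show ?thesis unfolding ptf_def by simp
    qed
    have F1: "\<bar>t a\<bar> \<le> 1/2" if "a \<le> A0" for a
    proof -
      have "real a \<le> real G * X / (2 * real K)" using that A0le by linarith
      then have "real a * real K \<le> real G * X / 2" using K1 by (simp add: field_simps)
      moreover have "\<bar>t a\<bar> = real a * real K / (real G * X)"
        unfolding t_def X_def by (simp add: abs_mult)
      ultimately show ?thesis using Gpos Xpos by (simp add: divide_le_eq)
    qed
    have F2: "norm (wv a b) \<le> r / 4" if "b \<in> PiE (UNIV::'n set) (\<lambda>_. {0..<int K})" for a b
    proof -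
      have comp: "\<bar>wv a b $ j\<bar> \<le> s" for j
      proof -
        define y where "y = real a * real K * x$j / x$j0"
        have "wv a b $ j = (of_int \<lfloor>y\<rfloor> - y + of_int (b j)) / real G"
          unfolding wv_def ptf_def t_def y_def using Gpos xj0 by (simp add: field_simps)
        moreover have "of_int \<lfloor>y\<rfloor> - y + of_int (b j) > -1"
        proof -
          have "0 \<le> b j" using that by (auto simp: PiE_iff)
          then have "0 \<le> real_of_int (b j)" by simp
          then show ?thesis using real_of_int_floor_add_one_gt[of y] by linarith
        qed
        moreover have "of_int \<lfloor>y\<rfloor> - y + of_int (b j) \<le> real K"
        proof -
          have "b j < int K" using that by (auto simp: PiE_iff)
          then have "of_int (b j) \<le> real K" by simp
          then show ?thesis using of_int_floor_le[of y] by linarith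
        qed
        ultimately have "\<bar>wv a b $ j\<bar> \<le> real K / real G"
          using Gpos K1 by (simp add: abs_le_iff divide_le_eq le_divide_eq)
        then show ?thesis using KG by linarith
      qed
      have "norm (wv a b) \<le> (\<Sum>j\<in>UNIV. \<bar>wv a b $ j\<bar>)" by (rule norm_le_l1_cart)
      also have "\<dots> \<le> (\<Sum>j\<in>(UNIV::'n set). s)" by (rule sum_mono) (rule comp)
      also have "\<dots> = real d * s" unfolding d_def by simp
      also have "\<dots> = r / 4" unfolding s_def using d1 by simp
      finally show ?thesis .
    qed
    have F3: "inj_on f I"
    proof (rule inj_onI)
      fix p q assume p: "p \<in> I" and q: "q \<in> I" and pq: "f p = f q"
      obtain a b where ab: "p = (a, b)" "a \<le> A0" "b \<in> PiE (UNIV::'n set) (\<lambda>_. {0..<int K})" using p unfolding I_def by auto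
      obtain a' b' where ab': "q = (a', b')" "a' \<le> A0" "b' \<in> PiE (UNIV::'n set) (\<lambda>_. {0..<int K})" using q unfolding I_def by auto
      have eq: "ptf a b = ptf a' b'" using pq unfolding f_def ab ab' by simp
      have "int a * int K + b j0 = int a' * int K + b' j0" using eq ptf0 by metis
      moreover have "0 \<le> b j0" "b j0 < int K" "0 \<le> b' j0" "b' j0 < int K" using ab(3) ab'(3) by (auto simp: PiE_iff)
      ultimately have "int a = int a'"
        by (metis add.commute div_mult_self3 div_pos_pos_trivial mult.commute add_0 not_less nat_int
            of_nat_0_less_iff div_mult_self1 div_pos_neg_trivial linorder_not_le)
      then have aa: "a = a'" by simp
      have "b j = b' j" for j using fun_cong[OF eq, of j] aa unfolding ptf_def by simp
      then have "b = b'" by auto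
      then show "p = q" using aa ab ab' by simp
    qed
    have vdec: "(\<chi> j. of_int (ptf a b j) / real G) = t a *\<^sub>R x + wv a b" for a b
      unfolding wv_def by simp
    have F4: "\<forall>p\<in>f ` I. \<forall>q\<in>f ` I. (\<chi> j. of_int (p j - q j) / real (M * N)) \<in> Lat N z \<longrightarrow> p = q"
    proof (intro ballI impI)
      fix p q assume p: "p \<in> f ` I" and q: "q \<in> f ` I" and L: "(\<chi> j. of_int (p j - q j) / real (M * N)) \<in> Lat N z"
      obtain a b where ab: "p = ptf a b" "a \<le> A0" "b \<in> PiE (UNIV::'n set) (\<lambda>_. {0..<int K})" using p unfolding I_def f_def by auto
      obtain a' b' where ab': "q = ptf a' b'" "a' \<le> A0" "b' \<in> PiE (UNIV::'n set) (\<lambda>_. {0..<int K})" using q unfolding I_def f_def by auto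
      let ?v = "(\<chi> j. of_int (p j - q j) / real (M * N)) :: real^'n"
      have "?v = (\<chi> j. of_int (ptf a b j) / real G) - (\<chi> j. of_int (ptf a' b' j) / real G)"
        unfolding ab ab' G_def by (simp add: vec_eq_iff diff_divide_distrib)
      also have "\<dots> = (t a - t a') *\<^sub>R x + (wv a b - wv a' b')"
        unfolding vdec by (simp add: algebra_simps)
      finally have vd: "?v = (t a - t a') *\<^sub>R x + (wv a b - wv a' b')" .
      have "\<bar>t a - t a'\<bar> \<le> 1" using F1[OF ab(2)] F1[OF ab'(2)] by linarith
      moreover have "norm (wv a b - wv a' b') \<le> r/2"
        using F2[OF ab(3), of a] F2[OF ab'(3), of a'] norm_triangle_ineq4[of "wv a b" "wv a' b'"] by linarith
      ultimately have "?v = 0" using Kset[OF r sep x1 x2 L vd] by blast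
      then have "of_int (p j - q j) / real (M * N) = 0" for j by (metis vec_lambda_beta zero_index)
      then have "p j = q j" for j using M1 N1 by fastforce
      then show "p = q" by auto
    qed
    have finI: "finite I" unfolding I_def by (simp add: finite_PiE)
    have cb: "card (f ` I) * N \<le> (M * N) ^ CARD('n)"
      by (rule count_bound[OF M1]) (use finI F4 in auto)
    have cI: "card (f ` I) = (A0 + 1) * K ^ d"
    proof -
      have "card (f ` I) = card I" by (rule card_image[OF F3])
      also have "\<dots> = (A0 + 1) * K ^ d"
      proof -
        have "nat (int K) = K" by simp
        then show ?thesis unfolding I_def d_def by (simp add: card_PiE card_cartesian_product)
      qed
      finally show ?thesis .
    qed
    have main: "(real A0 + 1) * real K ^ d * real N \<le> real G ^ d"
    proof -
      have "(A0 + 1) * K ^ d * N \<le> G ^ d" using cb cI unfolding G_def d_def by simp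
      then have "real ((A0 + 1) * K ^ d * N) \<le> real (G ^ d)" by (simp only: of_nat_le_iff)
      then show ?thesis by (simp add: algebra_simps)
    qed
    have "real G * X / (2 * real K) * real K ^ d * real N \<le> real G ^ d"
    proof -
      have "real G * X / (2 * real K) * real K ^ d * real N \<le> (real A0 + 1) * real K ^ d * real N"
        using A0ge K1 Npos by (intro mult_right_mono) auto
      then show ?thesis using main by linarith
    qed
    then have "real G * (X * real K ^ d' * real N) \<le> real G * (2 * real G ^ d')"
      unfolding dd using K1 by (simp add: field_simps)
    then have e1: "X * real K ^ d' * real N \<le> 2 * real G ^ d'" using Gpos by simp
    have "(s * real G / 2) ^ d' \<le> real K ^ d'" using Kge spos Gpos by (intro power_mono) auto
    then have "X * (s * real G / 2) ^ d' * real N \<le> X * real K ^ d' * real N"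
      using Xpos Npos by (intro mult_right_mono mult_left_mono) auto
    then have "X * (s / 2) ^ d' * real G ^ d' * real N \<le> 2 * real G ^ d'"
      using e1 by (simp add: power_mult_distrib power_divide algebra_simps)
    then have "X * (s / 2) ^ d' * real N \<le> 2" using Gpos by (simp add: algebra_simps)
    then have "X \<le> 2 * (2 / s) ^ d' / real N"
      using spos Npos by (simp add: field_simps power_divide)
    also have "2 / s = 8 * real d / r" unfolding s_def using r d1 by (simp add: field_simps)
    finally have "X \<le> 2 * (8 * real d / r) ^ d' / real N" .
    then have "real d * X \<le> real d * (2 * (8 * real d / r) ^ d' / real N)" using d1 by (intro mult_left_mono) auto
    then show ?thesis using Dx nX unfolding d_def d'_def by (simp add: algebra_simps)
  qed
qed

end


context lat
begin

definition Ecov :: real where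
  "Ecov = 2 * real CARD('n) * (8 * real CARD('n) / (\<delta>/4)) ^ (CARD('n) - 1) / real N + (\<delta>/4)/4"

lemma Ecov_pos: "Ecov > 0"
  unfolding Ecov_def using dpos N1 by (intro add_nonneg_pos) auto

lemma lat_cover: "\<exists>v\<in>Lat N z. norm (y - v) < Ecov"
proof -
  define r where "r = \<delta> / 4"
  have r: "r > 0" unfolding r_def using dpos by simp
  have sep: "\<forall>v\<in>Lat N z. v \<noteq> 0 \<longrightarrow> norm v \<ge> 2 * r" unfolding r_def using lat_norm by auto
  define S where "S = (\<lambda>v. norm (y - v)) ` Lat N z"
  have Sne: "S \<noteq> {}" unfolding S_def using Lat_zero by auto
  have Sbdd: "bdd_below S" unfolding S_def by (rule bdd_belowI[of _ 0]) auto
  define Di where "Di = Inf S"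
  obtain s0 where s0: "s0 \<in> S" "s0 < Di + r/4"
    using cInf_lessD[OF Sne, of "Di + r/4"] r unfolding Di_def by auto
  obtain v0 where v0: "v0 \<in> Lat N z" "norm (y - v0) < Di + r/4" using s0 unfolding S_def by auto
  define x where "x = y - v0"
  have x1: "norm x \<le> Di + r/4" using v0 unfolding x_def by simp
  have x2: "\<forall>v\<in>Lat N z. norm (x - v) \<ge> Di"
  proof
    fix v assume v: "v \<in> Lat N z"
    have "v0 + v \<in> Lat N z" using v0(1) v by (rule Lat_add)
    then have "norm (y - (v0 + v)) \<in> S" unfolding S_def by auto
    then have "Di \<le> norm (y - (v0 + v))" unfolding Di_def by (rule cInf_lower[OF _ Sbdd])
    then show "norm (x - v) \<ge> Di" unfolding x_def by (simp add: algebra_simps)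
  qed
  have "Di \<le> 2 * real CARD('n) * (8 * real CARD('n) / r) ^ (CARD('n) - 1) / real N"
    by (rule deep_bound[OF r sep x1 x2])
  then have "norm (y - v0) < Ecov" using v0(2) unfolding Ecov_def r_def by linarith
  then show ?thesis using v0(1) by blast
qed

lemma Lat_in_cube:
  assumes v: "v \<in> Lat N z" and c: "\<forall>j. 0 \<le> v$j \<and> v$j < 1"
  shows "v \<in> rank1_lattice N z"
proof -
  obtain k where k: "\<forall>j. v$j - of_int k * of_int (z$j) / real N \<in> \<int>" using v unfolding Lat_def by blast
  define n where "n = nat (k mod int N)"
  have m: "0 \<le> k mod int N" "k mod int N < int N" using N1 by auto
  then have n: "int n = k mod int N" "n < N" unfolding n_def by linarith+
  obtain q where kq: "k = int N * q + int n" using n(1) by (metis div_mult_mod_eq mult.commute)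
  have "lpt N z n = v"
  proof -
    have "frac (of_nat n * of_int (z$j) / of_nat N) = v$j" for j
    proof -
      have "of_nat n * of_int (z$j) / real N - v$j = - (v$j - of_int k * of_int (z$j) / real N) - of_int (q * z$j)"
        using kq N1 by (simp add: field_simps)
      then have "of_nat n * of_int (z$j) / real N - v$j \<in> \<int>" using k by (metis Ints_diff Ints_minus Ints_of_int)
      then show ?thesis using c by (simp add: frac_unique_iff)
    qed
    then show ?thesis unfolding lpt_def by (simp add: vec_eq_iff)
  qed
  then show ?thesis unfolding rank1_lattice_eq using n(2) by blast
qed

lemma cube_cover:
  assumes x: "x \<in> unit_cube"
  shows "\<exists>p\<in>rank1_lattice N z. dist x p \<le> (5 * real CARD('n) + 1) * Ecov"
proof -
  define d where "d = real CARD('n)"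
  have d1: "d \<ge> 1" unfolding d_def by (simp add: Suc_leI)
  have x01: "0 \<le> x$j \<and> x$j \<le> 1" for j using x unfolding unit_cube_def by auto
  have E0: "Ecov > 0" by (rule Ecov_pos)
  show ?thesis
  proof (cases "Ecov \<ge> 1/4")
    case True
    have p0: "lpt N z 0 \<in> rank1_lattice N z" unfolding rank1_lattice_eq using N1 by auto
    have l0: "lpt N z 0 = 0" unfolding lpt_def by (simp add: vec_eq_iff)
    have "dist x (lpt N z 0) = norm x" unfolding l0 by simp
    also have "\<dots> \<le> (\<Sum>j\<in>UNIV. \<bar>x$j\<bar>)" by (rule norm_le_l1_cart)
    also have "\<dots> \<le> (\<Sum>j\<in>(UNIV::'n set). 1)" by (rule sum_mono) (use x01 in auto)
    also have "\<dots> = d" unfolding d_def by simp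
    also have "\<dots> \<le> (5 * d + 1) * Ecov"
    proof -
      have "(5 * d + 1) * (1/4) \<le> (5 * d + 1) * Ecov" using True d1 by (intro mult_left_mono) auto
      moreover have "(5 * d + 1) * (1/4) = 5 * d / 4 + 1/4" by simp
      ultimately show ?thesis using d1 by linarith
    qed
    finally show ?thesis using p0 unfolding d_def by blast
  next
    case False
    then have E4: "Ecov < 1/4" by simp
    define y :: "real^'n" where "y = (\<chi> j. max Ecov (min (x$j) (1 - Ecov)))"
    have yj: "Ecov \<le> y$j" "y$j \<le> 1 - Ecov" "\<bar>x$j - y$j\<bar> \<le> Ecov" for j
      unfolding y_def using E4 E0 x01[of j] by (simp_all add: max_def min_def abs_le_iff)
    obtain v where v: "v \<in> Lat N z" "norm (y - v) < Ecov" using lat_cover by blast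
    have vc: "\<forall>j. 0 \<le> v$j \<and> v$j < 1"
    proof
      fix j
      have "\<bar>(y - v)$j\<bar> \<le> norm (y - v)" by (rule component_le_norm_cart)
      then have "\<bar>y$j - v$j\<bar> < Ecov" using v(2) by simp
      then show "0 \<le> v$j \<and> v$j < 1" using yj[of j] by linarith
    qed
    have vP: "v \<in> rank1_lattice N z" by (rule Lat_in_cube[OF v(1) vc])
    have "dist x v \<le> norm (x - y) + norm (y - v)"
      unfolding dist_norm by (metis diff_add_cancel norm_triangle_ineq add_diff_eq diff_diff_eq2)
    also have "norm (x - y) \<le> (\<Sum>j\<in>UNIV. \<bar>(x - y)$j\<bar>)" by (rule norm_le_l1_cart)
    also have "\<dots> \<le> (\<Sum>j\<in>(UNIV::'n set). Ecov)" by (rule sum_mono) (use yj in simp)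
    also have "\<dots> = d * Ecov" unfolding d_def by simp
    finally have "dist x v \<le> d * Ecov + Ecov" using v(2) by linarith
    also have "\<dots> \<le> (5 * d + 1) * Ecov" using E0 d1 by (simp add: algebra_simps)
    finally show ?thesis using vP unfolding d_def by blast
  qed
qed

lemma covering_bound: "covering_radius (rank1_lattice N z) \<le> (5 * real CARD('n) + 1) * Ecov"
  unfolding covering_radius_def
proof (rule cSUP_least)
  show "unit_cube \<noteq> {}" unfolding unit_cube_def by (auto intro!: exI[of _ 0])
  fix x :: "real^'n" assume x: "x \<in> unit_cube"
  obtain p where p: "p \<in> rank1_lattice N z" "dist x p \<le> (5 * real CARD('n) + 1) * Ecov"
    using cube_cover[OF x] by blast
  have "(INF y\<in>rank1_lattice N z. dist x y) \<le> dist x p"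
    by (rule cINF_lower[OF _ p(1)]) (rule bdd_belowI[of _ 0], auto)
  then show "(INF y\<in>rank1_lattice N z. dist x y) \<le> (5 * real CARD('n) + 1) * Ecov" using p(2) by linarith
qed

lemma separation_bound:
  assumes N2: "N \<ge> 2"
  shows "separation_radius (rank1_lattice N z) \<ge> \<delta> / 4"
proof -
  let ?P = "rank1_lattice N z"
  let ?S = "{dist x y | x y. x \<in> ?P \<and> y \<in> ?P \<and> x \<noteq> y}"
  have "lpt N z 0 \<in> ?P" "lpt N z 1 \<in> ?P" unfolding rank1_lattice_eq using N2 by auto
  moreover have "lpt N z 0 \<noteq> lpt N z 1" using lpt_inj N2 unfolding inj_on_def by force
  ultimately have Sne: "?S \<noteq> {}" by blast
  have "\<delta> / 2 \<le> Inf ?S"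
  proof (rule cInf_greatest[OF Sne])
    fix s assume "s \<in> ?S"
    then obtain x y where xy: "s = dist x y" "x \<in> ?P" "y \<in> ?P" "x \<noteq> y" by blast
    have "x \<in> Lat N z" "y \<in> Lat N z" using xy unfolding rank1_lattice_eq using lpt_Lat by auto
    then have "x - y \<in> Lat N z" by (rule Lat_diff)
    moreover have "x - y \<noteq> 0" using xy by simp
    ultimately have "norm (x - y) \<ge> \<delta> / 2" by (rule lat_norm)
    then show "\<delta> / 2 \<le> s" using xy by (simp add: dist_norm)
  qed
  then show ?thesis unfolding separation_radius_def by simp
qed

lemma mesh_bound:
  assumes N2: "N \<ge> 2"
  shows "mesh_ratio (rank1_lattice N z) \<le>
     4 * (5 * real CARD('n) + 1) * (2 * real CARD('n) * (32 * real CARD('n)) ^ (CARD('n) - 1) / (real N * \<delta> ^ CARD('n)) + 1/16)"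
proof -
  define d where "d = CARD('n)"
  define d' where "d' = d - 1"
  have dd: "d = Suc d'" unfolding d'_def d_def by simp
  have qpos: "\<delta> / 4 > 0" using dpos by simp
  have h: "covering_radius (rank1_lattice N z) \<le> (5 * real d + 1) * Ecov" unfolding d_def by (rule covering_bound)
  have q: "separation_radius (rank1_lattice N z) \<ge> \<delta> / 4" by (rule separation_bound[OF N2])
  have H0: "(5 * real d + 1) * Ecov \<ge> 0" using Ecov_pos by simp
  have "mesh_ratio (rank1_lattice N z) \<le> (5 * real d + 1) * Ecov / separation_radius (rank1_lattice N z)"
    unfolding mesh_ratio_def using h q qpos by (intro divide_right_mono) auto
  also have "\<dots> \<le> (5 * real d + 1) * Ecov / (\<delta> / 4)"
    using q qpos H0 by (intro divide_left_mono) auto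
  also have "(5 * real d + 1) * Ecov / (\<delta> / 4) =
     4 * (5 * real d + 1) * (2 * real d * (32 * real d) ^ d' / (real N * \<delta> ^ d) + 1/16)"
  proof -
    define T where "T = (32 * real d) ^ d'"
    have "8 * real d / (\<delta> / 4) = (32 * real d) / \<delta>" using dpos by (simp add: field_simps)
    then have "(8 * real d / (\<delta> / 4)) ^ d' = T / \<delta> ^ d'"
      unfolding T_def by (simp add: power_divide)
    then have Ee: "Ecov = 2 * real d * (T / \<delta> ^ d') / real N + \<delta> / 16"
      unfolding Ecov_def d_def d'_def by simp
    have "Ecov / \<delta> = (2 * real d * (T / \<delta> ^ d') / real N) / \<delta> + 1/16"
      unfolding Ee using dpos by (simp add: add_divide_distrib)
    also have "(2 * real d * (T / \<delta> ^ d') / real N) / \<delta> = 2 * real d * T / (real N * \<delta> ^ d)"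
      unfolding dd using dpos N1 by (simp add: field_simps)
    finally have Ed: "Ecov / \<delta> = 2 * real d * T / (real N * \<delta> ^ d) + 1/16" .
    have "(5 * real d + 1) * Ecov / (\<delta> / 4) = 4 * (5 * real d + 1) * (Ecov / \<delta>)"
      using dpos by (simp add: field_simps)
    then show ?thesis unfolding Ed T_def by simp
  qed
  finally show ?thesis unfolding d_def d'_def .
qed

end


context alg
begin

lemma ratio:
  assumes c2: "c2 > 0" "\<forall>N. N \<ge> 1 \<longrightarrow> c2 \<le> real N * (tn \<alpha> N) ^ CARD('n)"
  shows "real (Nseq \<alpha> (Suc (Suc k))) \<le> (2 ^ CARD('n) / c2) * real (Nseq \<alpha> (Suc k))"
proof -
  define N where "N = Nseq \<alpha> (Suc k)"
  define d where "d = CARD('n)"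
  have NM: "N \<ge> 1" "\<forall>M. 1 \<le> M \<and> M < N \<longrightarrow> tn \<alpha> M > tn \<alpha> N"
    using Nseq_main[OF li, of k] unfolding N_def by auto
  define \<delta> where "\<delta> = tn \<alpha> N"
  have dpos: "\<delta> > 0" unfolding \<delta>_def by (rule rat_lin_indep_pos[OF li NM(1)])
  have dh: "\<delta> \<le> 1/2" unfolding \<delta>_def by (rule torus_norm_half)
  have cN: "c2 \<le> real N * \<delta> ^ d" using c2 NM(1) unfolding \<delta>_def d_def by blast
  define L where "L = nat \<lfloor>1 / \<delta>\<rfloor> + 1"
  have L1: "L \<ge> 1" unfolding L_def by simp
  have Lgt: "real L > 1 / \<delta>"
  proof -
    have "1 / \<delta> < of_int \<lfloor>1 / \<delta>\<rfloor> + 1" by (rule real_of_int_floor_add_one_gt)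
    moreover have "of_int \<lfloor>1 / \<delta>\<rfloor> = real (nat \<lfloor>1 / \<delta>\<rfloor>)" using dpos by simp
    ultimately show ?thesis unfolding L_def by simp
  qed
  have Lle: "real L \<le> 2 / \<delta>"
  proof -
    have "of_int \<lfloor>1 / \<delta>\<rfloor> \<le> 1 / \<delta>" by (rule of_int_floor_le)
    moreover have "of_int \<lfloor>1 / \<delta>\<rfloor> = real (nat \<lfloor>1 / \<delta>\<rfloor>)" using dpos by simp
    moreover have "1 \<le> 1 / \<delta>" using dpos dh by (simp add: le_divide_eq)
    ultimately show ?thesis unfolding L_def by (simp add: add_divide_distrib[symmetric])
  qed
  have iL: "1 / real L < \<delta>" using Lgt dpos L1 by (simp add: divide_less_eq mult.commute)
  obtain n where n: "1 \<le> n" "n \<le> L ^ d" "tn \<alpha> n < 1 / real L" using dirichlet[OF L1, of \<alpha>] unfolding d_def by blast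
  have nd: "tn \<alpha> n < \<delta>" using n(3) iL by linarith
  have nN: "n > N"
  proof (rule ccontr)
    assume "\<not> n > N"
    then have "n < N \<or> n = N" by auto
    then show False using NM(2) n(1) nd unfolding \<delta>_def by auto
  qed
  have step: "Nseq \<alpha> (Suc (Suc k)) \<le> n" using Nseq_step[OF li, of k] nN nd unfolding N_def \<delta>_def by blast
  have "real n \<le> real L ^ d" using n(2) by (metis of_nat_le_iff of_nat_power)
  also have "\<dots> \<le> (2 / \<delta>) ^ d" using Lle by (intro power_mono) auto
  also have "\<dots> = 2 ^ d / \<delta> ^ d" by (simp add: power_divide)
  also have "\<dots> \<le> 2 ^ d / c2 * real N"
  proof -
    have "1 / \<delta> ^ d \<le> real N / c2" using cN c2(1) dpos by (simp add: field_simps)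
    then have "2 ^ d * (1 / \<delta> ^ d) \<le> 2 ^ d * (real N / c2)" by (intro mult_left_mono) auto
    then show ?thesis by simp
  qed
  finally show ?thesis using step unfolding N_def d_def by (meson of_nat_le_iff order_trans)
qed

end

theorem mainTheorem6:
  fixes \<alpha> :: "real^'n::finite"
  assumes "rat_lin_indep_1 \<alpha>"
    and "span_is_field \<alpha>"
  shows "(\<forall>i\<ge>2. rank1_admissible (Nseq \<alpha> i) (zvec \<alpha> i) \<and>
                card (rank1_lattice (Nseq \<alpha> i) (zvec \<alpha> i)) = Nseq \<alpha> i)
         \<and> quasi_uniform_family 2 (\<lambda>i. rank1_lattice (Nseq \<alpha> i) (zvec \<alpha> i))"
proof -
  interpret alg \<alpha> using assms by unfold_locales
  obtain c2 where c2: "c2 > 0" "\<forall>N. N \<ge> 1 \<longrightarrow> c2 \<le> real N * (tn \<alpha> N) ^ CARD('n)"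
    using simul by blast
  have L: "lat \<alpha> (Nseq \<alpha> i) (zvec \<alpha> i)" and N2: "Nseq \<alpha> i \<ge> 2" if i2: "i \<ge> 2" for i
  proof -
    obtain k where k: "i = Suc (Suc k)" using i2 by (metis add_2_eq_Suc le_Suc_ex)
    have m: "Nseq \<alpha> (Suc (Suc k)) \<ge> 1" "\<forall>M. 1 \<le> M \<and> M < Nseq \<alpha> (Suc (Suc k)) \<longrightarrow> tn \<alpha> M > tn \<alpha> (Nseq \<alpha> (Suc (Suc k)))"
      using Nseq_main[OF assms(1), of "Suc k"] by auto
    have m2: "Nseq \<alpha> (Suc k) \<ge> 1" using Nseq_main[OF assms(1), of k] by auto
    have st: "Nseq \<alpha> (Suc (Suc k)) > Nseq \<alpha> (Suc k)" using Nseq_step[OF assms(1), of k] by auto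
    show "Nseq \<alpha> i \<ge> 2" using st m2 k by simp
    show "lat \<alpha> (Nseq \<alpha> i) (zvec \<alpha> i)"
    proof
      show "Nseq \<alpha> i \<ge> 1" using m k by simp
      show "tn \<alpha> (Nseq \<alpha> i) > 0" by (rule rat_lin_indep_pos[OF assms(1)]) (use m k in simp)
      show "\<forall>M. 1 \<le> M \<and> M < Nseq \<alpha> i \<longrightarrow> tn \<alpha> (Nseq \<alpha> i) < tn \<alpha> M" using m k by simp
      show "\<forall>j. \<bar>real (Nseq \<alpha> i) * \<alpha>$j - of_int (zvec \<alpha> i $ j)\<bar> \<le> tn \<alpha> (Nseq \<alpha> i)"
      proof
        fix j
        have "\<bar>real (Nseq \<alpha> i) * \<alpha>$j - of_int (zvec \<alpha> i $ j)\<bar> = int_dist (real (Nseq \<alpha> i) * \<alpha>$j)"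
          unfolding zvec_def int_dist_eq by simp
        also have "\<dots> \<le> tn \<alpha> (Nseq \<alpha> i)" using tn_comp[of "Nseq \<alpha> i" \<alpha> j] by simp
        finally show "\<bar>real (Nseq \<alpha> i) * \<alpha>$j - of_int (zvec \<alpha> i $ j)\<bar> \<le> tn \<alpha> (Nseq \<alpha> i)" .
      qed
    qed
  qed
  have part1: "\<forall>i\<ge>2. rank1_admissible (Nseq \<alpha> i) (zvec \<alpha> i) \<and>
                card (rank1_lattice (Nseq \<alpha> i) (zvec \<alpha> i)) = Nseq \<alpha> i"
    using L lat.admissible lat.card_P by blast
  define d where "d = CARD('n)"
  define C where "C = 4 * (5 * real d + 1) * (2 * real d * (32 * real d) ^ (d - 1) / c2 + 1/16)"
  define c where "c = max 2 (2 ^ d / c2)"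
  have qa: "\<forall>i\<ge>2. finite (rank1_lattice (Nseq \<alpha> i) (zvec \<alpha> i)) \<and> rank1_lattice (Nseq \<alpha> i) (zvec \<alpha> i) \<subseteq> unit_cube
      \<and> card (rank1_lattice (Nseq \<alpha> i) (zvec \<alpha> i)) \<ge> 2"
    using part1 N2 by (auto simp: rank1_lattice_eq lpt_cube)
  have qb: "\<forall>i\<ge>2. card (rank1_lattice (Nseq \<alpha> i) (zvec \<alpha> i)) < card (rank1_lattice (Nseq \<alpha> (Suc i)) (zvec \<alpha> (Suc i))) \<and>
             real (card (rank1_lattice (Nseq \<alpha> (Suc i)) (zvec \<alpha> (Suc i)))) \<le> c * real (card (rank1_lattice (Nseq \<alpha> i) (zvec \<alpha> i)))"
  proof (intro allI impI)
    fix i :: nat assume i2: "i \<ge> 2"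
    obtain k where k: "i = Suc k" using i2 by (metis Suc_pred' less_le_trans pos2)
    have c1: "card (rank1_lattice (Nseq \<alpha> i) (zvec \<alpha> i)) = Nseq \<alpha> i" using part1 i2 by blast
    have c2': "card (rank1_lattice (Nseq \<alpha> (Suc i)) (zvec \<alpha> (Suc i))) = Nseq \<alpha> (Suc i)" using part1 i2 by simp
    have "Nseq \<alpha> (Suc (Suc k)) > Nseq \<alpha> (Suc k)" using Nseq_step[OF assms(1), of k] by auto
    moreover have "real (Nseq \<alpha> (Suc (Suc k))) \<le> (2 ^ d / c2) * real (Nseq \<alpha> (Suc k))"
      unfolding d_def by (rule ratio[OF c2])
    moreover have "(2 ^ d / c2) * real (Nseq \<alpha> (Suc k)) \<le> c * real (Nseq \<alpha> (Suc k))"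
      unfolding c_def by (intro mult_right_mono) auto
    ultimately show "card (rank1_lattice (Nseq \<alpha> i) (zvec \<alpha> i)) < card (rank1_lattice (Nseq \<alpha> (Suc i)) (zvec \<alpha> (Suc i))) \<and>
             real (card (rank1_lattice (Nseq \<alpha> (Suc i)) (zvec \<alpha> (Suc i)))) \<le> c * real (card (rank1_lattice (Nseq \<alpha> i) (zvec \<alpha> i)))"
      using c1 c2' k by simp
  qed
  have qc: "\<forall>i\<ge>2. mesh_ratio (rank1_lattice (Nseq \<alpha> i) (zvec \<alpha> i)) \<le> C"
  proof (intro allI impI)
    fix i :: nat assume i2: "i \<ge> 2"
    interpret l: lat \<alpha> "Nseq \<alpha> i" "zvec \<alpha> i" by (rule L[OF i2])
    have mb: "mesh_ratio (rank1_lattice (Nseq \<alpha> i) (zvec \<alpha> i)) \<le>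
     4 * (5 * real d + 1) * (2 * real d * (32 * real d) ^ (d - 1) / (real (Nseq \<alpha> i) * (tn \<alpha> (Nseq \<alpha> i)) ^ d) + 1/16)"
      unfolding d_def by (rule l.mesh_bound[OF N2[OF i2]])
    have "c2 \<le> real (Nseq \<alpha> i) * (tn \<alpha> (Nseq \<alpha> i)) ^ d" using c2 N2[OF i2] unfolding d_def by simp
    then have "2 * real d * (32 * real d) ^ (d - 1) / (real (Nseq \<alpha> i) * (tn \<alpha> (Nseq \<alpha> i)) ^ d)
        \<le> 2 * real d * (32 * real d) ^ (d - 1) / c2"
      using c2(1) by (intro divide_left_mono) auto
    then have "4 * (5 * real d + 1) * (2 * real d * (32 * real d) ^ (d - 1) / (real (Nseq \<alpha> i) * (tn \<alpha> (Nseq \<alpha> i)) ^ d) + 1/16) \<le> C"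
      unfolding C_def by (intro mult_left_mono add_right_mono) auto
    then show "mesh_ratio (rank1_lattice (Nseq \<alpha> i) (zvec \<alpha> i)) \<le> C" using mb by linarith
  qed
  have "c > 1" unfolding c_def by simp
  then have "quasi_uniform_family 2 (\<lambda>i. rank1_lattice (Nseq \<alpha> i) (zvec \<alpha> i))"
    unfolding quasi_uniform_family_def using qa qb qc by blast
  then show ?thesis using part1 by blast
qed

end
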